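(* Let $n,r$ be positive integers with $r\le n$, let $c$ be an integer and $0\le p\le n$. Then $G_q(r,n,c,T(n,p))(k_1,\ldots,k_{n-r})$ is a $q$-quasi-polynomial in $k_i$ of degree at most $2r$, for each $i=1,2,\ldots,n-r$.
   Context: $q$ is an indeterminate. $T(n,p)(k_1,\ldots,k_n)=\sum_{1\le j_1<\cdots<j_p\le n}(-1)^{k_{j_1}+\cdots+k_{j_p}}$ for $p\ge1$, and $T(n,0)=1$. Sums use the convention: $\sum_{i=a}^bf(i)=f(a)+\cdots+f(b)$ if $a\le b$, $0$ if $b=a-1$, and $-f(b+1)-\cdots-f(a-1)$ if $b+1\le a-1$. For a function $A$ on $\mathbb{Z}^n$: $G_q(0,n,c,A)=A$ and $G_q(r,n,c,A)(k_1,\ldots,k_{n-r})=\sum_{l_1=0}^{k_1}\sum_{l_2=k_1}^{k_2}\cdots\sum_{l_{n-r}=k_{n-r-1}}^{k_{n-r}}\sum_{l_{n-r+1}=k_{n-r}}^{c}G_q(r-1,n,c,A)(l_1,\ldots,l_{n-r+1})q^{l_1+\cdots+l_{n-r+1}}$. A $q$-quasi-polynomial in integer variables $X_1,\ldots,X_N$ over $\mathbb{C}$ is a finite sum $\sum_{m}c_m(X)q^{m_1X_1+\cdots+m_NX_N}$ ($m\in\mathbb{Z}_{\ge0}^N$) whose coefficients $c_m$ are periodic functions on $\mathbb{Z}^N$ with values in rational functions of $q$ over $\mathbb{C}$; its degree in $X_i$ is the largest $m_i$ occurring with nonzero coefficient when it is regarded as a $q$-quasi-polynomial in $X_i$ with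 coefficients $q$-quasi-polynomials in the other variables. *)

theory Defs
  imports "HOL-Computational_Algebra.Polynomial" "HOL-Computational_Algebra.Fraction_Field"
begin

text \<open>Rational functions in the indeterminate q over the complex numbers.\<close>
type_synonym ratfun = "complex poly fract"

definition qvar :: ratfun where
  "qvar = Fract [:0, 1:] 1"

definition gsum :: "(int \<Rightarrow> 'a::ab_group_add) \<Rightarrow> int \<Rightarrow> int \<Rightarrow> 'a" where
  "gsum f a b = (if a \<le> b then (\<Sum>i\<in>{a..b}. f i)
                 else if b = a - 1 then 0
                 else - (\<Sum>i\<in>{b+1..a-1}. f i))"

fun nsum :: "(int list \<Rightarrow> 'a::ab_group_add) \<Rightarrow> (int \<times> int) list \<Rightarrow> 'a" where
  "nsum f [] = f []"
| "nsum f ((a, b) # bs) = gsum (\<lambda>l. nsum (\<lambda>ls. f (l # ls)) bs) a b"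

text \<open>T(n,p)(k_1,...,k_n), indices 0-based; T(n,0) = 1 (empty subset).\<close>
definition T :: "nat \<Rightarrow> nat \<Rightarrow> int list \<Rightarrow> 'a::field" where
  "T n p ks = (\<Sum>J\<in>{J. J \<subseteq> {0..<n} \<and> card J = p}. \<Prod>j\<in>J. (-1) powi (ks ! j))"

text \<open>G_q(r,n,c,A); argument lists of length n-r. Bounds for l_1..l_{n-r+1}:
  (0,k_1), (k_1,k_2), ..., (k_{n-r-1},k_{n-r}), (k_{n-r},c).\<close>
fun Gq :: "'a::field \<Rightarrow> nat \<Rightarrow> nat \<Rightarrow> int \<Rightarrow> (int list \<Rightarrow> 'a) \<Rightarrow> int list \<Rightarrow> 'a" where
  "Gq q 0 n c A = A"
| "Gq q (Suc r) n c A =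
     (\<lambda>ks. nsum (\<lambda>ls. Gq q r n c A ls * q powi (sum_list ls)) (zip (0 # ks) (ks @ [c])))"

definition periodic_on_Zn :: "nat \<Rightarrow> (int list \<Rightarrow> 'b) \<Rightarrow> bool" where
  "periodic_on_Zn N g \<longleftrightarrow> (\<exists>P::int. P > 0 \<and>
     (\<forall>X j. length X = N \<longrightarrow> j < N \<longrightarrow> g (X[j := X ! j + P]) = g X))"

definition qqp_deg_le :: "'a::field \<Rightarrow> nat \<Rightarrow> nat \<Rightarrow> nat \<Rightarrow> (int list \<Rightarrow> 'a) \<Rightarrow> bool" where
  "qqp_deg_le q N i d f \<longleftrightarrow>
     (\<exists>(M :: nat list set) (cf :: nat list \<Rightarrow> int list \<Rightarrow> 'a).
        finite M \<and> (\<forall>m\<in>M. length m = N \<and> m ! i \<le> d \<and> periodic_on_Zn N (cf m)) \<and>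
        (\<forall>X. length X = N \<longrightarrow>
           f X = (\<Sum>m\<in>M. cf m X * q powi (\<Sum>j<N. int (m ! j) * X ! j))))"

end

theory Submission
  imports Defs "HOL-Library.Function_Algebras"
begin

definition base :: "int \<times> nat \<Rightarrow> ratfun" where
  "base b = of_int (fst b) * qvar ^ snd b"

lemma qpow_Fract: "qvar ^ e = Fract (monom 1 e) 1"
proof (induction e)
  case 0 then show ?case by (simp add: One_fract_def monom_0 one_pCons)
next
  case (Suc e)
  have "monom (1::complex) (Suc e) = [:0,1:] * monom 1 e"
    by (simp add: monom_Suc)
  then show ?case using Suc by (simp add: qvar_def)
qed

lemma of_int_Fract: "(of_int s :: ratfun) = Fract [:of_int s:] 1"
proof -
  have "(of_int s :: ratfun) = Fract (of_int s) 1"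
  proof (cases s rule: int_cases)
    case (nonneg n) then show ?thesis by (simp add: of_nat_fract)
  next
    case (neg n) then show ?thesis
      by (simp add: of_nat_fract minus_fract del: of_nat_Suc)
  qed
  moreover have "(of_int s :: complex poly) = [:of_int s:]" by (simp add: of_int_poly)
  ultimately show ?thesis by simp
qed

lemma base_Fract: "base (s,e) = Fract (smult (of_int s) (monom 1 e)) 1"
  by (simp add: base_def qpow_Fract of_int_Fract)

lemma base_ne1:
  assumes "s = 1 \<or> s = -1" "1 \<le> e"
  shows "base (s,e) \<noteq> 1"
proof
  assume "base (s,e) = 1"
  then have "Fract (smult (of_int s) (monom 1 e)) 1 = Fract (1::complex poly) 1"
    by (simp add: base_Fract One_fract_def)
  then have "smult (of_int s) (monom 1 e) = (1::complex poly)"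
    by (simp add: eq_fract)
  then have "coeff (smult (of_int s) (monom (1::complex) e)) e = coeff 1 e" by simp
  then show False using assms by (auto simp: coeff_1)
qed

lemma base_ne0:
  assumes "s = 1 \<or> s = -1"
  shows "base (s,e) \<noteq> 0"
proof
  assume "base (s,e) = 0"
  then have "Fract (smult (of_int s) (monom 1 e)) 1 = Fract (0::complex poly) 1"
    by (simp add: base_Fract Zero_fract_def)
  then have "smult (of_int s) (monom 1 e) = (0::complex poly)"
    by (simp add: eq_fract)
  then have "coeff (smult (of_int s) (monom (1::complex) e)) e = 0" by simp
  then show False using assms by auto
qed

lemma qvar_ne0: "qvar \<noteq> 0"
  using base_ne0[of 1 1] by (simp add: base_def)

lemma qpow_ne1: "1 \<le> e \<Longrightarrow> qvar ^ e \<noteq> 1"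
  using base_ne1[of 1 e] by (simp add: base_def)

lemma q_ne1: "qvar \<noteq> 1"
  using qpow_ne1[of 1] by simp

lemma base_Suc: "base (s, Suc e) = qvar * base (s,e)"
  by (simp add: base_def)

section \<open>Generalized sums\<close>

lemma sum_tele_int:
  assumes "\<And>x. F (x+1) - F x = h x"
  shows "(\<Sum>i\<in>{a..a + int k - 1}. h i) = F (a + int k) - (F a :: 'a::ab_group_add)"
proof (induction k)
  case 0 then show ?case by simp
next
  case (Suc k)
  have "{a..a + int (Suc k) - 1} = insert (a + int k) {a..a + int k - 1}" by auto
  then have "(\<Sum>i\<in>{a..a + int (Suc k) - 1}. h i) = h (a + int k) + (\<Sum>i\<in>{a..a + int k - 1}. h i)"
    by simp
  also have "\<dots> = F (a + int (Suc k)) - F a" using Suc assms[of "a + int k"]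
    by (simp add: algebra_simps)
  finally show ?case .
qed

lemma gsum_tele:
  assumes "\<And>x. F (x+1) - F x = h x"
  shows "gsum h a b = F (b+1) - (F a :: 'a::ab_group_add)"
proof -
  consider "a \<le> b" | "b = a - 1" | "b + 1 \<le> a - 1" by linarith
  then show ?thesis
  proof cases
    case 1
    define k where "k = nat (b - a + 1)"
    have b: "{a..a + int k - 1} = {a..b}" "F (a + int k) = F (b + 1)" using 1 by (simp_all add: k_def)
    have "(\<Sum>i\<in>{a..b}. h i) = F (b+1) - F a"
      using sum_tele_int[where F=F and h=h and a=a and k=k, OF assms] unfolding b .
    then show ?thesis using 1 by (simp add: gsum_def)
  next
    case 2 then show ?thesis by (simp add: gsum_def)
  next
    case 3
    define k where "k = nat (a - 1 - (b+1) + 1)"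
    have a: "{b + 1..b + 1 + int k - 1} = {b+1..a - 1}" "F (b + 1 + int k) = F a" using 3 by (simp_all add: k_def)
    have "(\<Sum>i\<in>{b+1..a-1}. h i) = F a - F (b+1)"
      using sum_tele_int[where F=F and h=h and a="b+1" and k=k, OF assms] unfolding a .
    then show ?thesis using 3 by (simp add: gsum_def)
  qed
qed

lemma morph_uminus:
  fixes h :: "'a::ab_group_add \<Rightarrow> 'b::ab_group_add"
  assumes "\<And>x y. h (x + y) = h x + h y"
  shows "h (- x) = - (h x :: 'b::ab_group_add)"
proof -
  have "h 0 = 0" using assms[of 0 0] by simp
  then have "h x + h (-x) = 0" using assms[of x "-x"] by simp
  then show ?thesis by (simp add: eq_neg_iff_add_eq_0 add.commute)
qed

lemma gsum_morph:
  fixes h :: "'a::ab_group_add \<Rightarrow> 'b::ab_group_add"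
  assumes "\<And>x y. h (x + y) = h x + h y"
  shows "gsum (\<lambda>l. h (f l)) a b = h (gsum f a b)"
proof -
  have h0: "h 0 = 0" using assms[of 0 0] by simp
  have s: "\<And>A. sum (\<lambda>l. h (f l)) A = h (sum f A)"
    using sum_comp_morphism[of h, OF h0 assms] by (simp add: o_def)
  show ?thesis by (simp add: gsum_def s morph_uminus[OF assms] h0)
qed

lemma nsum_cong:
  "(\<And>ls. length ls = length bs \<Longrightarrow> f ls = g ls) \<Longrightarrow> nsum f bs = nsum g bs"
proof (induction bs arbitrary: f g)
  case Nil then show ?case by simp
next
  case (Cons ab bs)
  obtain a b where ab: "ab = (a,b)" by (cases ab)
  have "\<And>l. nsum (\<lambda>ls. f (l # ls)) bs = nsum (\<lambda>ls. g (l # ls)) bs"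
  proof -
    fix l
    show "nsum (\<lambda>ls. f (l # ls)) bs = nsum (\<lambda>ls. g (l # ls)) bs"
      by (rule Cons.IH) (rule Cons.prems, simp)
  qed
  then show ?case by (simp only: ab nsum.simps)
qed

lemma nsum_morph:
  fixes h :: "'a::ab_group_add \<Rightarrow> 'b::ab_group_add"
  assumes "\<And>x y. h (x + y) = h x + h y"
  shows "nsum (\<lambda>ls. h (f ls)) bs = h (nsum f bs)"
proof (induction bs arbitrary: f)
  case Nil then show ?case by simp
next
  case (Cons ab bs)
  obtain a b where ab: "ab = (a,b)" by (cases ab)
  have "nsum (\<lambda>ls. h (f ls)) (ab # bs) = gsum (\<lambda>l. nsum (\<lambda>ls. h (f (l # ls))) bs) a b"
    by (simp only: ab nsum.simps)
  also have "\<dots> = gsum (\<lambda>l. h (nsum (\<lambda>ls. f (l # ls)) bs)) a b"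
    by (simp only: Cons.IH)
  also have "\<dots> = h (gsum (\<lambda>l. nsum (\<lambda>ls. f (l # ls)) bs) a b)"
    by (rule gsum_morph[OF assms])
  also have "\<dots> = h (nsum f (ab # bs))"
    by (simp only: ab nsum.simps)
  finally show ?case .
qed

section \<open>Matrices as functions\<close>

type_synonym R = "ratfun poly"
type_synonym fmat = "nat \<Rightarrow> nat \<Rightarrow> R"

definition mm :: "nat \<Rightarrow> fmat \<Rightarrow> fmat \<Rightarrow> fmat" where
  "mm d A B = (\<lambda>i j. \<Sum>k<d. A i k * B k j)"

definition idm :: "nat \<Rightarrow> fmat" where
  "idm d = (\<lambda>i j. if i = j \<and> i < d then 1 else 0)"

definition cln :: "nat \<Rightarrow> fmat \<Rightarrow> bool" where
  "cln d A \<longleftrightarrow> (\<forall>i j. (d \<le> i \<or> d \<le> j) \<longrightarrow> A i j = 0)"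

definition blk :: "nat \<Rightarrow> fmat \<Rightarrow> fmat \<Rightarrow> fmat \<Rightarrow> fmat \<Rightarrow> fmat" where
  "blk d A B C D = (\<lambda>i j. if i < d then (if j < d then A i j else B i (j - d))
                          else (if j < d then C (i - d) j else D (i - d) (j - d)))"

definition rm :: "R \<Rightarrow> fmat \<Rightarrow> fmat" where
  "rm t A = (\<lambda>i j. t * A i j)"

lemma fun_sum_apply: "(\<Sum>a\<in>S. F a) i = (\<Sum>a\<in>S. F a i)"
  by (induction S rule: infinite_finite_induct) auto

lemma fmat_sum_apply: "(\<Sum>a\<in>S. (F a :: fmat)) i j = (\<Sum>a\<in>S. F a i j)"
  by (simp add: fun_sum_apply)

lemma mm_add_left: "mm d (A + B) C = mm d A C + mm d B C"
  by (rule ext)+ (simp add: mm_def sum.distrib algebra_simps)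
lemma mm_add_right: "mm d A (B + C) = mm d A B + mm d A C"
  by (rule ext)+ (simp add: mm_def sum.distrib algebra_simps)
lemma mm_uminus_left: "mm d (- A) C = - mm d A C"
  by (rule ext)+ (simp add: mm_def sum_negf)
lemma mm_uminus_right: "mm d A (- C) = - mm d A C"
  by (rule ext)+ (simp add: mm_def sum_negf)
lemma mm_diff_left: "mm d (A - B) C = mm d A C - mm d B C"
  by (rule ext)+ (simp add: mm_def sum_subtractf algebra_simps)
lemma mm_diff_right: "mm d A (B - C) = mm d A B - mm d A C"
  by (rule ext)+ (simp add: mm_def sum_subtractf algebra_simps)
lemma mm_zero_left [simp]: "mm d 0 C = 0"
  by (rule ext)+ (simp add: mm_def)
lemma mm_zero_right [simp]: "mm d A 0 = 0"
  by (rule ext)+ (simp add: mm_def)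
lemma mm_rm_left: "mm d (rm t A) B = rm t (mm d A B)"
  by (rule ext)+ (simp add: mm_def rm_def sum_distrib_left algebra_simps)
lemma mm_rm_right: "mm d A (rm t B) = rm t (mm d A B)"
  by (rule ext)+ (simp add: mm_def rm_def sum_distrib_left algebra_simps)

lemma rm_rm [simp]: "rm s (rm t A) = rm (s * t) A"
  by (rule ext)+ (simp add: rm_def algebra_simps)
lemma rm_add_scal: "rm s A + rm t A = rm (s + t) A"
  by (rule ext)+ (simp add: rm_def algebra_simps)
lemma rm_add: "rm t (A + B) = rm t A + rm t B"
  by (rule ext)+ (simp add: rm_def algebra_simps)
lemma rm_diff: "rm t (A - B) = rm t A - rm t B"
  by (rule ext)+ (simp add: rm_def algebra_simps)
lemma rm_uminus: "rm t (- A) = - rm t A"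
  by (rule ext)+ (simp add: rm_def algebra_simps)
lemma rm_uminus_scal: "rm (- t) A = - rm t A"
  by (rule ext)+ (simp add: rm_def algebra_simps)
lemma rm_zero [simp]: "rm t 0 = 0"
  by (rule ext)+ (simp add: rm_def)
lemma rm_zero_scal [simp]: "rm 0 A = 0"
  by (rule ext)+ (simp add: rm_def)
lemma rm_one [simp]: "rm 1 A = A"
  by (rule ext)+ (simp add: rm_def)
lemma rm_sum: "rm t (\<Sum>a\<in>S. F a) = (\<Sum>a\<in>S. rm t (F a))"
  by (rule ext)+ (simp add: rm_def fmat_sum_apply sum_distrib_left)
lemma rm_sum_scal: "rm (\<Sum>a\<in>S. f a) A = (\<Sum>a\<in>S. rm (f a) A)"
  by (rule ext)+ (simp add: rm_def fmat_sum_apply sum_distrib_right)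

lemma mm_sum_left: "mm d (\<Sum>a\<in>S. F a) B = (\<Sum>a\<in>S. mm d (F a) B)"
  by (rule ext)+ (simp add: mm_def fmat_sum_apply sum_distrib_right, rule sum.swap)
lemma mm_sum_right: "mm d A (\<Sum>a\<in>S. F a) = (\<Sum>a\<in>S. mm d A (F a))"
  by (rule ext)+ (simp add: mm_def fmat_sum_apply sum_distrib_left, rule sum.swap)

lemma mm_assoc: "mm d (mm d A B) C = mm d A (mm d B C)"
  by (rule ext)+ (simp add: mm_def sum_distrib_left sum_distrib_right mult.assoc, rule sum.swap)

lemma cln_mm: "cln d A \<Longrightarrow> cln d B \<Longrightarrow> cln d (mm d A B)"
  by (auto simp: cln_def mm_def)
lemma cln_add: "cln d A \<Longrightarrow> cln d B \<Longrightarrow> cln d (A + B)"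
  by (auto simp: cln_def)
lemma cln_diff: "cln d A \<Longrightarrow> cln d B \<Longrightarrow> cln d (A - B)"
  by (auto simp: cln_def)
lemma cln_uminus: "cln d A \<Longrightarrow> cln d (- A)"
  by (auto simp: cln_def)
lemma cln_rm: "cln d A \<Longrightarrow> cln d (rm t A)"
  by (auto simp: cln_def rm_def)
lemma cln_idm: "cln d (idm d)"
  by (auto simp: cln_def idm_def)
lemma cln_zero: "cln d 0"
  by (auto simp: cln_def)
lemma cln_sum: "(\<And>a. a \<in> S \<Longrightarrow> cln d (F a)) \<Longrightarrow> cln d (\<Sum>a\<in>S. F a)"
  by (auto simp: cln_def fmat_sum_apply)
lemma cln_blk: "cln d A \<Longrightarrow> cln d B \<Longrightarrow> cln d C \<Longrightarrow> cln d D \<Longrightarrow> cln (2*d) (blk d A B C D)"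
  by (auto simp: cln_def blk_def)

lemma mm_idm_left: "cln d A \<Longrightarrow> mm d (idm d) A = A"
proof (rule ext)+
  fix i j assume c: "cln d A"
  have "mm d (idm d) A i j = (\<Sum>k<d. if i = k then A k j else 0)"
    unfolding mm_def idm_def by (rule sum.cong) auto
  also have "\<dots> = (if i < d then A i j else 0)" by (simp add: sum.delta)
  also have "\<dots> = A i j" using c by (auto simp: cln_def)
  finally show "mm d (idm d) A i j = A i j" .
qed

lemma mm_idm_right: "cln d A \<Longrightarrow> mm d A (idm d) = A"
proof (rule ext)+
  fix i j assume c: "cln d A"
  have "mm d A (idm d) i j = (\<Sum>k<d. if k = j then A i k else 0)"
    unfolding mm_def idm_def by (rule sum.cong) auto
  also have "\<dots> = (if j < d then A i j else 0)" by (simp add: sum.delta')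
  also have "\<dots> = A i j" using c by (auto simp: cln_def)
  finally show "mm d A (idm d) i j = A i j" .
qed

lemma sum_split2: fixes d :: nat shows "(\<Sum>k<2*d. f k) = (\<Sum>k<d. f k) + (\<Sum>k<d. f (k + d)) "
proof -
  have "{..<2*d} = {..<d} \<union> {d..<2*d}" by auto
  then have "(\<Sum>k<2*d. f k) = (\<Sum>k<d. f k) + (\<Sum>k\<in>{d..<2*d}. f k)"
    by (simp add: sum.union_disjoint ivl_disj_int_one(2))
  also have "(\<Sum>k\<in>{d..<2*d}. f k) = (\<Sum>k<d. f (k + d))"
  proof -
    have "{d..<2*d} = (\<lambda>k. k + d) ` {..<d}"
      by (auto simp: image_iff) (metis add.commute le_add_diff_inverse less_diff_conv2 lessThan_iff diff_less_mono mult_2)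
    then show ?thesis by (simp add: sum.reindex)
  qed
  finally show ?thesis .
qed

lemma blk_mult:
  "mm (2*d) (blk d A B C D) (blk d A' B' C' D') =
   blk d (mm d A A' + mm d B C') (mm d A B' + mm d B D') (mm d C A' + mm d D C') (mm d C B' + mm d D D')"
proof (rule ext)+
  fix i j
  have e1: "k < d \<Longrightarrow> blk d A B C D i k = (if i < d then A i k else C (i-d) k)" for k by (simp add: blk_def)
  have e2: "blk d A B C D i (k + d) = (if i < d then B i k else D (i-d) k)" for k by (simp add: blk_def)
  have e3: "k < d \<Longrightarrow> blk d A' B' C' D' k j = (if j < d then A' k j else B' k (j-d))" for k by (simp add: blk_def)
  have e4: "blk d A' B' C' D' (k + d) j = (if j < d then C' k j else D' k (j-d))" for k by (simp add: blk_def)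
  have "mm (2*d) (blk d A B C D) (blk d A' B' C' D') i j =
        (\<Sum>k<d. blk d A B C D i k * blk d A' B' C' D' k j) + (\<Sum>k<d. blk d A B C D i (k + d) * blk d A' B' C' D' (k + d) j)"
    by (simp only: mm_def sum_split2)
  also have "\<dots> = (\<Sum>k<d. (if i < d then A i k else C (i-d) k) * (if j < d then A' k j else B' k (j-d))) +
                   (\<Sum>k<d. (if i < d then B i k else D (i-d) k) * (if j < d then C' k j else D' k (j-d)))"
    by (intro arg_cong2[where f="(+)"] sum.cong refl) (simp_all add: e1 e2 e3 e4)
  also have "\<dots> = blk d (mm d A A' + mm d B C') (mm d A B' + mm d B D') (mm d C A' + mm d D C') (mm d C B' + mm d D D') i j"
    by (cases "i < d"; cases "j < d") (simp_all add: blk_def mm_def)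
  finally show "mm (2*d) (blk d A B C D) (blk d A' B' C' D') i j = blk d (mm d A A' + mm d B C') (mm d A B' + mm d B D') (mm d C A' + mm d D C') (mm d C B' + mm d D D') i j" .
qed

lemma blk_add: "blk d A B C D + blk d A' B' C' D' = blk d (A+A') (B+B') (C+C') (D+D')"
  by (rule ext)+ (simp add: blk_def)
lemma blk_diff: "blk d A B C D - blk d A' B' C' D' = blk d (A-A') (B-B') (C-C') (D-D')"
  by (rule ext)+ (simp add: blk_def)
lemma blk_uminus: "- blk d A B C D = blk d (-A) (-B) (-C) (-D)"
  by (rule ext)+ (simp add: blk_def)
lemma blk_rm: "rm t (blk d A B C D) = blk d (rm t A) (rm t B) (rm t C) (rm t D)"
  by (rule ext)+ (simp add: blk_def rm_def)
lemma blk_zero: "blk d 0 0 0 0 = 0"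
  by (rule ext)+ (simp add: blk_def)
lemma blk_sum: "(\<Sum>a\<in>S. blk d (A a) (B a) (C a) (D a)) = blk d (\<Sum>a\<in>S. A a) (\<Sum>a\<in>S. B a) (\<Sum>a\<in>S. C a) (\<Sum>a\<in>S. D a)"
  by (rule ext)+ (simp add: blk_def fmat_sum_apply)

lemma blk_idm: "blk d (idm d) 0 0 (idm d) = idm (2*d)"
  by (rule ext)+ (auto simp: blk_def idm_def)

section \<open>Chain sums\<close>

definition chainM :: "nat \<Rightarrow> (int \<Rightarrow> int \<Rightarrow> fmat) \<Rightarrow> (int \<times> int) list \<Rightarrow> fmat" where
  "chainM d M bs = foldr (\<lambda>ab acc. mm d (M (fst ab) (snd ab)) acc) bs (idm d)"

definition chainL :: "nat \<Rightarrow> (int \<Rightarrow> fmat) \<Rightarrow> int list \<Rightarrow> fmat" where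
  "chainL d H ls = foldr (\<lambda>l acc. mm d (H l) acc) ls (idm d)"

lemma nsum_chain:
  fixes Fn :: "fmat \<Rightarrow> 'b::ab_group_add"
  assumes "\<And>x y. Fn (x + y) = Fn x + Fn y"
  shows "nsum (\<lambda>ls. Fn (chainL d H ls)) bs = Fn (chainM d (\<lambda>a b. gsum H a b) bs)"
  using assms
proof (induction bs arbitrary: Fn)
  case Nil then show ?case by (simp add: chainL_def chainM_def)
next
  case (Cons ab bs)
  obtain a b where ab: "ab = (a,b)" by (cases ab)
  have "nsum (\<lambda>ls. Fn (chainL d H ls)) (ab # bs) =
        gsum (\<lambda>l. nsum (\<lambda>ls. Fn (mm d (H l) (chainL d H ls))) bs) a b"
    by (simp add: ab chainL_def)
  also have "\<dots> = gsum (\<lambda>l. Fn (mm d (H l) (chainM d (\<lambda>a b. gsum H a b) bs))) a b"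
  proof -
    have "\<And>l. nsum (\<lambda>ls. Fn (mm d (H l) (chainL d H ls))) bs = Fn (mm d (H l) (chainM d (\<lambda>a b. gsum H a b) bs))"
    proof -
      fix l
      show "nsum (\<lambda>ls. Fn (mm d (H l) (chainL d H ls))) bs = Fn (mm d (H l) (chainM d (\<lambda>a b. gsum H a b) bs))"
        by (rule Cons.IH[where Fn="\<lambda>X. Fn (mm d (H l) X)"]) (simp only: mm_add_right Cons.prems)
    qed
    then show ?thesis by simp
  qed
  also have "\<dots> = Fn (mm d (gsum H a b) (chainM d (\<lambda>a b. gsum H a b) bs))"
    by (rule gsum_morph[where h="\<lambda>Y. Fn (mm d Y (chainM d (\<lambda>a b. gsum H a b) bs))"]) (simp only: mm_add_left Cons.prems)
  also have "\<dots> = Fn (chainM d (\<lambda>a b. gsum H a b) (ab # bs))"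
    by (simp add: ab chainM_def)
  finally show ?case .
qed

abbreviation cst :: "ratfun \<Rightarrow> R" where "cst a \<equiv> [:a:]"

lemma cst_mult: "cst a * cst b = cst (a * b)" by simp
lemma cst_add: "cst a + cst b = cst (a + b)" by simp
lemma cst_diff: "cst a - cst b = cst (a - b)" by (simp add: diff_pCons)
lemma cst_uminus: "- cst a = cst (- a)" by simp
lemma cst_1: "cst 1 = 1" by (simp add: one_pCons)

lemma rm_cst_cst: "rm (cst a) (rm (cst b) A) = rm (cst (a * b)) A"
  by (simp add: mult.commute)

definition Xif :: "((int \<times> nat) \<times> fmat) list \<Rightarrow> int \<Rightarrow> fmat" where
  "Xif L x = (\<Sum>a<length L. rm (cst (base (fst (L!a)) powi x)) (snd (L!a)))"

definition Inv :: "nat \<Rightarrow> nat \<Rightarrow> ((int \<times> nat) \<times> fmat) list \<Rightarrow> fmat \<Rightarrow> bool" where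
  "Inv m d L D \<longleftrightarrow>
     cln d D \<and>
     (\<forall>a<length L. cln d (snd (L!a))) \<and>
     (\<forall>a<length L. (fst (fst (L!a)) = 1 \<or> fst (fst (L!a)) = -1) \<and> 1 \<le> snd (fst (L!a)) \<and> snd (fst (L!a)) \<le> 2*m+1) \<and>
     (\<forall>a<length L. rm (cst ((base (fst (L!a)))^2)) (mm d (snd (L!a)) D) = rm (cst (qvar^(2*m+2))) (mm d D (snd (L!a)))) \<and>
     (\<forall>a<length L. \<forall>b<length L. \<exists>t.
        rm (cst (base (fst (L!a)))) (mm d (snd (L!a)) (snd (L!b))) + rm (cst (base (fst (L!b)))) (mm d (snd (L!b)) (snd (L!a))) = rm t D
        \<and> (base (fst (L!a)) * base (fst (L!b)) \<noteq> qvar^(2*m+2) \<longrightarrow> t = 0))"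

lemma cln_Xif: "(\<forall>a<length L. cln d (snd (L!a))) \<Longrightarrow> cln d (Xif L x)"
  unfolding Xif_def by (rule cln_sum) (auto intro: cln_rm)

lemma Inv_base_ne0: assumes "Inv m d L D" "a < length L" shows "base (fst (L!a)) \<noteq> 0"
proof -
  obtain s e where se: "fst (L!a) = (s,e)" by (cases "fst (L!a)")
  have "s = 1 \<or> s = -1" using assms se unfolding Inv_def by (metis fst_conv)
  then show ?thesis using se base_ne0 by simp
qed

lemma two_ne0: "(2::ratfun) \<noteq> 0"
proof
  assume "(2::ratfun) = 0"
  then have "Fract (of_nat 2) 1 = Fract (0::complex poly) 1"
    by (metis of_nat_fract of_nat_numeral Zero_fract_def)
  then have "(of_nat 2 :: complex poly) = 0" by (simp add: eq_fract)
  then show False by (simp add: of_nat_poly)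
qed

lemma half_double_poly: "[:1/2:] * (x + x) = (x :: R)"
proof -
  have "[:1/2:] * (x + x) = smult (1/2) x + smult (1/2) x" by (simp add: distrib_left)
  also have "\<dots> = smult (1/2 + 1/2) x" by (simp only: smult_add_left)
  also have "(1/2 + 1/2 :: ratfun) = 1" using two_ne0 by (simp add: field_simps)
  then have "smult (1/2 + 1/2) x = x" by simp
  finally show ?thesis .
qed

lemma half_double: "rm (cst (1/2)) (S + S) = (S :: fmat)"
  by (rule ext)+ (simp only: rm_def plus_fun_apply half_double_poly)

lemma choice2_ex: "\<forall>a b. \<exists>t. P a b t \<Longrightarrow> (\<And>t. \<forall>a b. P a b (t a b) \<Longrightarrow> thesis) \<Longrightarrow> thesis"
proof -
  assume h: "\<forall>a b. \<exists>t. P a b t" and c: "\<And>t. \<forall>a b. P a b (t a b) \<Longrightarrow> thesis"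
  show thesis
  proof (rule c[of "\<lambda>a b. SOME t. P a b t"], intro allI)
    fix a b
    from h have "\<exists>t. P a b t" by blast
    then show "P a b (SOME t. P a b t)" by (rule someI_ex)
  qed
qed

lemma geo:
  assumes I: "Inv m d L D"
  shows "\<exists>k. \<forall>x. mm d (Xif L (x+1)) (Xif L x) = rm (cst ((qvar^(2*m+2)) powi x)) (rm k D)"
proof -
  define n where "n = length L"
  define mu where "mu a = base (fst (L!a))" for a
  define E where "E a = snd (L!a)" for a
  define lam where "lam = qvar^(2*m+2)"
  have mu0: "a < n \<Longrightarrow> mu a \<noteq> 0" for a using Inv_base_ne0[OF I] by (simp add: mu_def n_def)
  have "\<forall>a<n. \<forall>b<n. \<exists>t. rm (cst (mu a)) (mm d (E a) (E b)) + rm (cst (mu b)) (mm d (E b) (E a)) = rm t D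
        \<and> (mu a * mu b \<noteq> lam \<longrightarrow> t = 0)"
    using I by (simp add: Inv_def mu_def E_def n_def lam_def)
  then have "\<forall>a b. \<exists>tt. a < n \<longrightarrow> b < n \<longrightarrow> (rm (cst (mu a)) (mm d (E a) (E b)) + rm (cst (mu b)) (mm d (E b) (E a)) = rm tt D
        \<and> (mu a * mu b \<noteq> lam \<longrightarrow> tt = 0))" by blast
  then obtain t where t0: "\<forall>a b. a < n \<longrightarrow> b < n \<longrightarrow> (rm (cst (mu a)) (mm d (E a) (E b)) + rm (cst (mu b)) (mm d (E b) (E a)) = rm (t a b) D
        \<and> (mu a * mu b \<noteq> lam \<longrightarrow> t a b = 0))"
    by (rule choice2_ex)
  have t: "\<And>a b. a < n \<Longrightarrow> b < n \<Longrightarrow> rm (cst (mu a)) (mm d (E a) (E b)) + rm (cst (mu b)) (mm d (E b) (E a)) = rm (t a b) D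
        \<and> (mu a * mu b \<noteq> lam \<longrightarrow> t a b = 0)" using t0 by blast
  define k where "k = cst (1/2) * (\<Sum>a<n. \<Sum>b<n. t a b)"
  have "mm d (Xif L (x+1)) (Xif L x) = rm (cst (lam powi x)) (rm k D)" for x
  proof -
    define Y where "Y a b = rm (cst ((mu a * mu b) powi x)) (rm (cst (mu a)) (mm d (E a) (E b)))" for a b
    have Xi: "Xif L y = (\<Sum>a<n. rm (cst (mu a powi y)) (E a))" for y
      by (simp add: Xif_def n_def mu_def E_def)
    have S: "mm d (Xif L (x+1)) (Xif L x) = (\<Sum>a<n. \<Sum>b<n. Y a b)"
    proof -
      have "mm d (Xif L (x+1)) (Xif L x) = (\<Sum>a<n. \<Sum>b<n. rm (cst (mu a powi (x+1) * mu b powi x)) (mm d (E a) (E b)))"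
        by (simp only: Xi mm_sum_left mm_sum_right mm_rm_left mm_rm_right rm_cst_cst rm_sum, subst sum.swap, simp add: mult.commute)
      also have "\<dots> = (\<Sum>a<n. \<Sum>b<n. Y a b)"
      proof (intro sum.cong refl)
        fix a b assume a: "a \<in> {..<n}" and b: "b \<in> {..<n}"
        have "mu a powi (x+1) * mu b powi x = (mu a * mu b) powi x * mu a"
          using mu0[of a] a by (simp add: power_int_add_1 power_int_mult_distrib)
        then show "rm (cst (mu a powi (x+1) * mu b powi x)) (mm d (E a) (E b)) = Y a b"
          by (simp add: Y_def rm_cst_cst mult.commute)
      qed
      finally show ?thesis .
    qed
    have S2: "(\<Sum>a<n. \<Sum>b<n. Y a b) = (\<Sum>a<n. \<Sum>b<n. Y b a)"
      by (rule sum.swap)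
    have pair: "Y a b + Y b a = rm (cst (lam powi x)) (rm (t a b) D)" if "a < n" "b < n" for a b
    proof -
      have "Y a b + Y b a = rm (cst ((mu a * mu b) powi x)) (rm (cst (mu a)) (mm d (E a) (E b)) + rm (cst (mu b)) (mm d (E b) (E a)))"
        by (simp add: Y_def rm_add mult.commute)
      also have "\<dots> = rm (cst ((mu a * mu b) powi x)) (rm (t a b) D)"
        using t[OF that] by simp
      also have "\<dots> = rm (cst (lam powi x)) (rm (t a b) D)"
        using t[OF that] by (cases "mu a * mu b = lam") auto
      finally show ?thesis .
    qed
    have "(\<Sum>a<n. \<Sum>b<n. Y a b) + (\<Sum>a<n. \<Sum>b<n. Y a b) = (\<Sum>a<n. \<Sum>b<n. Y a b + Y b a)"
      by (subst (2) S2) (simp add: sum.distrib)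
    also have "\<dots> = (\<Sum>a<n. \<Sum>b<n. rm (cst (lam powi x)) (rm (t a b) D))"
      by (intro sum.cong refl) (simp add: pair)
    also have "\<dots> = rm (cst (lam powi x)) (rm (\<Sum>a<n. \<Sum>b<n. t a b) D)"
      by (simp add: rm_sum rm_sum_scal)
    finally have "rm (cst (1/2)) ((\<Sum>a<n. \<Sum>b<n. Y a b) + (\<Sum>a<n. \<Sum>b<n. Y a b)) = rm (cst (1/2)) (rm (cst (lam powi x)) (rm (\<Sum>a<n. \<Sum>b<n. t a b) D))"
      by simp
    then have "(\<Sum>a<n. \<Sum>b<n. Y a b) = rm (cst (lam powi x)) (rm k D)"
      by (simp only: half_double) (simp add: k_def mult.commute mult.left_commute)
    then show ?thesis using S by simp
  qed
  then show ?thesis unfolding lam_def by blast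
qed

lemma rm_diff_scal: "rm s A - rm t A = rm (s - t) A"
  by (rule ext)+ (simp add: rm_def algebra_simps)

lemma rm_cst_uminus: "rm (cst (- a)) A = - rm (cst a) A"
  by (rule ext)+ (simp add: rm_def)

definition alp :: "ratfun \<Rightarrow> ratfun" where "alp mu = -1 / (qvar * mu - 1)"
definition bet :: "ratfun \<Rightarrow> ratfun" where "bet mu = mu / (qvar * mu - 1)"
definition cN :: ratfun where "cN = 1 / (qvar - 1)"
definition cM :: "nat \<Rightarrow> ratfun" where "cM m = -1 / (qvar^(2*m+3) - 1)"

definition elO :: "nat \<Rightarrow> ratfun \<Rightarrow> fmat \<Rightarrow> fmat" where
  "elO d mu E = blk d (rm (cst (alp mu)) E) 0 0 (rm (cst (bet mu)) E)"
definition elN :: "nat \<Rightarrow> fmat" where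
  "elN d = blk d 0 (rm (cst cN) (idm d)) 0 0"
definition elM :: "nat \<Rightarrow> nat \<Rightarrow> fmat \<Rightarrow> fmat" where
  "elM m d K = blk d 0 0 (rm (cst (cM m)) K) 0"

definition stepL :: "nat \<Rightarrow> nat \<Rightarrow> ((int \<times> nat) \<times> fmat) list \<Rightarrow> ((int \<times> nat) \<times> fmat) list" where
  "stepL m d L = map (\<lambda>(b,E). ((fst b, Suc (snd b)), elO d (base b) E)) L
     @ [((1,1), elN d), ((1, 2*m+3), elM m d (mm d (Xif L 1) (Xif L 0)))]"

definition stepD :: "nat \<Rightarrow> nat \<Rightarrow> fmat \<Rightarrow> fmat" where
  "stepD m d D = blk d D 0 0 (rm (cst (qvar^(2*m+2))) D)"

lemma geoK:
  assumes I: "Inv m d L D"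
  shows "mm d (Xif L (x+1)) (Xif L x) = rm (cst ((qvar^(2*m+2)) powi x)) (mm d (Xif L 1) (Xif L 0))"
    and "\<exists>k. mm d (Xif L 1) (Xif L 0) = rm k D"
proof -
  obtain k where k: "\<And>x. mm d (Xif L (x+1)) (Xif L x) = rm (cst ((qvar^(2*m+2)) powi x)) (rm k D)"
    using geo[OF I] by blast
  have k0: "mm d (Xif L 1) (Xif L 0) = rm k D" using k[of 0] by (simp add: cst_1)
  show "mm d (Xif L (x+1)) (Xif L x) = rm (cst ((qvar^(2*m+2)) powi x)) (mm d (Xif L 1) (Xif L 0))"
    using k[of x] k0 by simp
  show "\<exists>k. mm d (Xif L 1) (Xif L 0) = rm k D" using k0 by blast
qed

lemma Xif_stepL:
  "Xif (stepL m d L) y =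
     (\<Sum>a<length L. rm (cst (base (fst (fst (L!a)), Suc (snd (fst (L!a)))) powi y)) (elO d (base (fst (L!a))) (snd (L!a))))
     + rm (cst (qvar powi y)) (elN d)
     + rm (cst ((qvar^(2*m+3)) powi y)) (elM m d (mm d (Xif L 1) (Xif L 0)))"
proof -
  define f where "f = (\<lambda>(b::int\<times>nat,E::fmat). ((fst b, Suc (snd b)), elO d (base b) E))"
  have len: "length (stepL m d L) = Suc (Suc (length L))" by (simp add: stepL_def)
  have nth1: "a < length L \<Longrightarrow> stepL m d L ! a = f (L!a)" for a
    by (simp add: stepL_def nth_append f_def)
  have nth2: "stepL m d L ! length L = ((1,1), elN d)"
    by (simp add: stepL_def nth_append)
  have nth3: "stepL m d L ! Suc (length L) = ((1, 2*m+3), elM m d (mm d (Xif L 1) (Xif L 0)))"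
    by (simp add: stepL_def nth_append)
  have b1: "base (1,Suc 0) = qvar" by (simp add: base_def)
  have b2: "base (1,2*m+3) = qvar^(2*m+3)" by (simp add: base_def)
  show ?thesis
    unfolding Xif_def len sum.lessThan_Suc nth2 nth3
    by (simp add: nth1 f_def b1 b2 split_beta)
qed

lemma rm_delta:
  assumes "beta \<noteq> 0"
  shows "rm (cst (beta powi (x+1))) X - rm (cst (beta powi x)) X = rm (cst (beta powi x * (beta - 1))) X"
proof -
  have "beta powi (x+1) = beta powi x * beta" using assms by (simp add: power_int_add_1)
  then have "beta powi (x+1) - beta powi x = beta powi x * (beta - 1)"
    by (simp add: algebra_simps)
  then show ?thesis
    by (simp add: rm_diff_scal cst_diff)
qed

lemma Inv_shape:
  assumes "Inv m d L D" "a < length L"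
  shows "(fst (fst (L!a)) = 1 \<or> fst (fst (L!a)) = -1) \<and> 1 \<le> snd (fst (L!a)) \<and> snd (fst (L!a)) \<le> 2*m+1"
  using assms unfolding Inv_def by blast

lemma Inv_cln:
  assumes "Inv m d L D"
  shows "cln d D" "\<And>a. a < length L \<Longrightarrow> cln d (snd (L!a))"
  using assms unfolding Inv_def by blast+

lemma base_fst: "base (fst (L!a)) = base (fst (fst (L!a)), snd (fst (L!a)))" by simp

lemma old_delta:
  assumes s: "s = 1 \<or> s = -1" and e: "1 \<le> e"
  shows "rm (cst (base (s, Suc e) powi (x+1))) (elO d (base (s,e)) E) - rm (cst (base (s, Suc e) powi x)) (elO d (base (s,e)) E)
       = blk d (- rm (cst (qvar powi x)) (rm (cst (base (s,e) powi x)) E)) 0 0 (rm (cst (qvar powi x)) (rm (cst (base (s,e) powi (x+1))) E))"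
proof -
  define mu where "mu = base (s,e)"
  have b: "base (s, Suc e) = qvar * mu" by (simp add: mu_def base_Suc)
  have mu0: "mu \<noteq> 0" using base_ne0[OF s] by (simp add: mu_def)
  have ne1: "qvar * mu \<noteq> 1" using base_ne1[OF s, of "Suc e"] b by simp
  have ne0: "qvar * mu \<noteq> 0" using mu0 qvar_ne0 by simp
  have c1: "(qvar * mu) powi x * (qvar * mu - 1) * alp mu = - (qvar powi x * mu powi x)"
    using ne1 by (simp add: alp_def power_int_mult_distrib field_simps)
  have mx: "mu powi (x+1) = mu powi x * mu" using mu0 by (simp add: power_int_add_1)
  have c2: "(qvar * mu) powi x * (qvar * mu - 1) * bet mu = qvar powi x * mu powi (x+1)"
    unfolding mx using ne1 mu0 by (simp add: bet_def power_int_mult_distrib field_simps)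
  have "rm (cst (base (s, Suc e) powi (x+1))) (elO d mu E) - rm (cst (base (s, Suc e) powi x)) (elO d mu E)
      = rm (cst ((qvar * mu) powi x * (qvar * mu - 1))) (elO d mu E)"
    unfolding b by (rule rm_delta[OF ne0])
  also have "\<dots> = blk d (rm (cst (- (qvar powi x * mu powi x))) E) 0 0 (rm (cst (qvar powi x * mu powi (x+1))) E)"
    unfolding elO_def blk_rm rm_cst_cst c1 c2 by simp
  also have "\<dots> = blk d (- rm (cst (qvar powi x)) (rm (cst (mu powi x)) E)) 0 0 (rm (cst (qvar powi x)) (rm (cst (mu powi (x+1))) E))"
    by (simp add: rm_cst_cst rm_cst_uminus mult.commute)
  finally show ?thesis unfolding mu_def .
qed

lemma delta_step:
  assumes I: "Inv m d L D"
  shows "Xif (stepL m d L) (x+1) - Xif (stepL m d L) x =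
         rm (cst (qvar powi x)) (blk d (- Xif L x) (idm d) (- mm d (Xif L (x+1)) (Xif L x)) (Xif L (x+1)))"
proof -
  define n where "n = length L"
  define K where "K = mm d (Xif L 1) (Xif L 0)"
  define lam where "lam = qvar^(2*m+2)"
  define Oo where "Oo y = (\<Sum>a<n. rm (cst (base (fst (fst (L!a)), Suc (snd (fst (L!a)))) powi y)) (elO d (base (fst (L!a))) (snd (L!a))))" for y
  have X': "Xif (stepL m d L) y = Oo y + rm (cst (qvar powi y)) (elN d) + rm (cst ((qvar^(2*m+3)) powi y)) (elM m d K)" for y
    unfolding Oo_def K_def n_def by (rule Xif_stepL)
  have Od: "Oo (x+1) - Oo x = blk d (- rm (cst (qvar powi x)) (Xif L x)) 0 0 (rm (cst (qvar powi x)) (Xif L (x+1)))"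
  proof -
    have "Oo (x+1) - Oo x = (\<Sum>a<n. blk d (- rm (cst (qvar powi x)) (rm (cst (base (fst (L!a)) powi x)) (snd (L!a)))) 0 0
                                  (rm (cst (qvar powi x)) (rm (cst (base (fst (L!a)) powi (x+1))) (snd (L!a)))))"
      unfolding Oo_def sum_subtractf[symmetric]
    proof (rule sum.cong[OF refl])
      fix a assume "a \<in> {..<n}"
      then have sh: "(fst (fst (L!a)) = 1 \<or> fst (fst (L!a)) = -1) \<and> 1 \<le> snd (fst (L!a))"
        using Inv_shape[OF I] by (simp add: n_def)
      show "rm (cst (base (fst (fst (L!a)), Suc (snd (fst (L!a)))) powi (x+1))) (elO d (base (fst (L!a))) (snd (L!a))) -
            rm (cst (base (fst (fst (L!a)), Suc (snd (fst (L!a)))) powi x)) (elO d (base (fst (L!a))) (snd (L!a))) =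
            blk d (- rm (cst (qvar powi x)) (rm (cst (base (fst (L!a)) powi x)) (snd (L!a)))) 0 0
                  (rm (cst (qvar powi x)) (rm (cst (base (fst (L!a)) powi (x+1))) (snd (L!a))))"
        using old_delta[of "fst (fst (L!a))" "snd (fst (L!a))" x d "snd (L!a)"] sh by simp
    qed
    also have "\<dots> = blk d (- rm (cst (qvar powi x)) (Xif L x)) 0 0 (rm (cst (qvar powi x)) (Xif L (x+1)))"
      by (simp add: blk_sum sum_negf rm_sum Xif_def n_def)
    finally show ?thesis .
  qed
  have Nd: "rm (cst (qvar powi (x+1))) (elN d) - rm (cst (qvar powi x)) (elN d) = blk d 0 (rm (cst (qvar powi x)) (idm d)) 0 0"
  proof -
    have "(qvar - 1) * cN = 1" using q_ne1 by (simp add: cN_def)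
    then have c: "qvar powi x * (qvar - 1) * cN = qvar powi x" by (simp add: mult.assoc)
    have "rm (cst (qvar powi (x+1))) (elN d) - rm (cst (qvar powi x)) (elN d) = rm (cst (qvar powi x * (qvar - 1))) (elN d)"
      by (rule rm_delta[OF qvar_ne0])
    then show ?thesis
      by (simp only: elN_def blk_rm rm_cst_cst c rm_zero)
  qed
  have Md: "rm (cst ((qvar^(2*m+3)) powi (x+1))) (elM m d K) - rm (cst ((qvar^(2*m+3)) powi x)) (elM m d K)
            = blk d 0 0 (- rm (cst (qvar powi x)) (mm d (Xif L (x+1)) (Xif L x))) 0"
  proof -
    have ne1: "qvar^(2*m+3) \<noteq> 1" by (rule qpow_ne1) simp
    have ne0: "qvar^(2*m+3) \<noteq> 0" using qvar_ne0 by simp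
    have e3: "2*m+3 = Suc (2*m+2)" by simp
    have l: "qvar^(2*m+3) = qvar * lam" unfolding lam_def e3 power_Suc ..
    have c: "(qvar^(2*m+3)) powi x * (qvar^(2*m+3) - 1) * cM m = - (qvar powi x * lam powi x)"
      using ne1 unfolding cM_def l by (simp add: power_int_mult_distrib field_simps)
    have KK: "mm d (Xif L (x+1)) (Xif L x) = rm (cst (lam powi x)) K"
      unfolding K_def lam_def by (rule geoK(1)[OF I])
    have "rm (cst ((qvar^(2*m+3)) powi (x+1))) (elM m d K) - rm (cst ((qvar^(2*m+3)) powi x)) (elM m d K)
       = rm (cst ((qvar^(2*m+3)) powi x * (qvar^(2*m+3) - 1))) (elM m d K)"
      by (rule rm_delta[OF ne0])
    then show ?thesis
      by (simp only: elM_def blk_rm rm_cst_cst c rm_zero KK rm_cst_uminus)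
  qed
  have "Xif (stepL m d L) (x+1) - Xif (stepL m d L) x =
        (Oo (x+1) - Oo x) + (rm (cst (qvar powi (x+1))) (elN d) - rm (cst (qvar powi x)) (elN d))
        + (rm (cst ((qvar^(2*m+3)) powi (x+1))) (elM m d K) - rm (cst ((qvar^(2*m+3)) powi x)) (elM m d K))"
    unfolding X' by (simp add: algebra_simps)
  also have "\<dots> = blk d (- rm (cst (qvar powi x)) (Xif L x)) (rm (cst (qvar powi x)) (idm d))
                         (- rm (cst (qvar powi x)) (mm d (Xif L (x+1)) (Xif L x))) (rm (cst (qvar powi x)) (Xif L (x+1)))"
    unfolding Od Nd Md blk_add by simp
  also have "\<dots> = rm (cst (qvar powi x)) (blk d (- Xif L x) (idm d) (- mm d (Xif L (x+1)) (Xif L x)) (Xif L (x+1)))"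
    by (simp add: blk_rm rm_uminus)
  finally show ?thesis .
qed

lemma alp_bet: "bet mu = - mu * alp mu"
  by (simp add: alp_def bet_def)

lemma prod_OO: "mm (2*d) (elO d mu E) (elO d nu F) =
   blk d (rm (cst (alp mu * alp nu)) (mm d E F)) 0 0 (rm (cst (bet mu * bet nu)) (mm d E F))"
  by (simp add: elO_def blk_mult mm_rm_left mm_rm_right rm_cst_cst)

lemma prod_ON: "cln d E \<Longrightarrow> mm (2*d) (elO d mu E) (elN d) = blk d 0 (rm (cst (alp mu * cN)) E) 0 0"
  by (simp add: elO_def elN_def blk_mult mm_rm_left mm_rm_right rm_cst_cst mm_idm_right)

lemma prod_NO: "cln d E \<Longrightarrow> mm (2*d) (elN d) (elO d mu E) = blk d 0 (rm (cst (cN * bet mu)) E) 0 0"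
  by (simp add: elO_def elN_def blk_mult mm_rm_left mm_rm_right rm_cst_cst mm_idm_left)

lemma prod_OM: "mm (2*d) (elO d mu E) (elM m d K) = blk d 0 0 (rm (cst (bet mu * cM m)) (mm d E K)) 0"
  by (simp add: elO_def elM_def blk_mult mm_rm_left mm_rm_right rm_cst_cst)

lemma prod_MO: "mm (2*d) (elM m d K) (elO d mu E) = blk d 0 0 (rm (cst (cM m * alp mu)) (mm d K E)) 0"
  by (simp add: elO_def elM_def blk_mult mm_rm_left mm_rm_right rm_cst_cst)

lemma prod_NN: "mm (2*d) (elN d) (elN d) = 0"
  by (simp add: elN_def blk_mult blk_zero)

lemma prod_MM: "mm (2*d) (elM m d K) (elM m d K) = 0"
  by (simp add: elM_def blk_mult blk_zero)

lemma prod_NM: "cln d K \<Longrightarrow> mm (2*d) (elN d) (elM m d K) = blk d (rm (cst (cN * cM m)) K) 0 0 0"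
  by (simp add: elN_def elM_def blk_mult mm_rm_left mm_rm_right rm_cst_cst mm_idm_left)

lemma prod_MN: "cln d K \<Longrightarrow> mm (2*d) (elM m d K) (elN d) = blk d 0 0 0 (rm (cst (cM m * cN)) K)"
  by (simp add: elN_def elM_def blk_mult mm_rm_left mm_rm_right rm_cst_cst mm_idm_right)

lemma prod_OD: "mm (2*d) (elO d mu E) (stepD m d D) =
   blk d (rm (cst (alp mu)) (mm d E D)) 0 0 (rm (cst (bet mu * qvar^(2*m+2))) (mm d E D))"
  by (simp add: elO_def stepD_def blk_mult mm_rm_left mm_rm_right rm_cst_cst)

lemma prod_DO: "mm (2*d) (stepD m d D) (elO d mu E) =
   blk d (rm (cst (alp mu)) (mm d D E)) 0 0 (rm (cst (qvar^(2*m+2) * bet mu)) (mm d D E))"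
  by (simp add: elO_def stepD_def blk_mult mm_rm_left mm_rm_right rm_cst_cst)

lemma prod_ND: "cln d D \<Longrightarrow> mm (2*d) (elN d) (stepD m d D) = blk d 0 (rm (cst (cN * qvar^(2*m+2))) D) 0 0"
  by (simp add: elN_def stepD_def blk_mult mm_rm_left mm_rm_right rm_cst_cst mm_idm_left)

lemma prod_DN: "cln d D \<Longrightarrow> mm (2*d) (stepD m d D) (elN d) = blk d 0 (rm (cst cN) D) 0 0"
  by (simp add: elN_def stepD_def blk_mult mm_rm_left mm_rm_right rm_cst_cst mm_idm_right)

lemma prod_MD: "mm (2*d) (elM m' d K) (stepD m d D) = blk d 0 0 (rm (cst (cM m')) (mm d K D)) 0"
  by (simp add: elM_def stepD_def blk_mult mm_rm_left mm_rm_right rm_cst_cst)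

lemma prod_DM: "mm (2*d) (stepD m d D) (elM m' d K) = blk d 0 0 (rm (cst (qvar^(2*m+2) * cM m')) (mm d D K)) 0"
  by (simp add: elM_def stepD_def blk_mult mm_rm_left mm_rm_right rm_cst_cst)

definition PX :: "nat \<Rightarrow> ratfun \<Rightarrow> fmat \<Rightarrow> ratfun \<Rightarrow> fmat \<Rightarrow> fmat" where
  "PX d al A be B = rm (cst al) (mm d A B) + rm (cst be) (mm d B A)"

definition Pgood :: "nat \<Rightarrow> ratfun \<Rightarrow> fmat \<Rightarrow> ratfun \<Rightarrow> fmat \<Rightarrow> ratfun \<Rightarrow> fmat \<Rightarrow> bool" where
  "Pgood d lam D al A be B \<longleftrightarrow> (\<exists>t. PX d al A be B = rm t D \<and> (al * be \<noteq> lam \<longrightarrow> t = 0))"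

lemma Pgood_sym: "Pgood d lam D al A be B \<Longrightarrow> Pgood d lam D be B al A"
  unfolding Pgood_def PX_def by (simp add: add.commute mult.commute)

lemma Pgood_zero: "PX d al A be B = 0 \<Longrightarrow> Pgood d lam D al A be B"
  unfolding Pgood_def by (rule exI[of _ 0]) simp

lemma lam_Suc: "qvar^(2*Suc m+2) = qvar * qvar * qvar^(2*m+2)"
  by (simp add: power_add power2_eq_square)

lemma rm_cst_add: "rm (cst a) X + rm (cst b) X = rm (cst (a+b)) X"
  by (simp add: rm_add_scal)

lemma P_OO:
  assumes g: "Pgood d (qvar^(2*m+2)) D mu E nu F"
  shows "Pgood (2*d) (qvar^(2*Suc m+2)) (stepD m d D) (qvar*mu) (elO d mu E) (qvar*nu) (elO d nu F)"
proof -
  define lam where "lam = qvar^(2*m+2)"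
  obtain t where t: "PX d mu E nu F = rm t D" "mu * nu \<noteq> lam \<Longrightarrow> t = 0"
    using g unfolding Pgood_def lam_def by blast
  define c where "c = qvar * alp mu * alp nu"
  have tl: "rm (cst (qvar*mu)) (rm (cst (alp mu * alp nu)) (mm d E F)) + rm (cst (qvar*nu)) (rm (cst (alp nu * alp mu)) (mm d F E))
        = rm (cst c) (PX d mu E nu F)"
    unfolding PX_def rm_add rm_cst_cst c_def by (simp add: mult_ac)
  have br: "rm (cst (qvar*mu)) (rm (cst (bet mu * bet nu)) (mm d E F)) + rm (cst (qvar*nu)) (rm (cst (bet nu * bet mu)) (mm d F E))
        = rm (cst (c * (mu * nu))) (PX d mu E nu F)"
    unfolding PX_def rm_add rm_cst_cst c_def alp_bet by (simp add: mult_ac)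
  have tt: "cst (mu * nu) * t = cst lam * t" using t(2) by (cases "mu * nu = lam") auto
  have "PX (2*d) (qvar*mu) (elO d mu E) (qvar*nu) (elO d nu F)
        = blk d (rm (cst c) (PX d mu E nu F)) 0 0 (rm (cst (c * (mu * nu))) (PX d mu E nu F))"
    unfolding PX_def prod_OO blk_rm blk_add tl br by simp
  also have "\<dots> = blk d (rm (cst c * t) D) 0 0 (rm (cst c * (cst (mu * nu) * t)) D)"
    unfolding t(1) by (simp add: mult_ac)
  also have "\<dots> = rm (cst c * t) (stepD m d D)"
    unfolding tt stepD_def blk_rm lam_def by (simp add: mult_ac)
  finally have eq: "PX (2*d) (qvar*mu) (elO d mu E) (qvar*nu) (elO d nu F) = rm (cst c * t) (stepD m d D)" .
  have "qvar * mu * (qvar * nu) \<noteq> qvar^(2*Suc m+2) \<Longrightarrow> cst c * t = 0"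
    using t(2) qvar_ne0 unfolding lam_Suc lam_def by (auto simp: mult_ac)
  then show ?thesis unfolding Pgood_def using eq by blast
qed

lemma P_ON:
  assumes "cln d E"
  shows "Pgood (2*d) lam' D' (qvar*mu) (elO d mu E) qvar (elN d)"
proof (rule Pgood_zero)
  have "qvar * mu * (alp mu * cN) + qvar * (cN * bet mu) = 0"
    by (simp add: alp_bet algebra_simps)
  then show "PX (2*d) (qvar*mu) (elO d mu E) qvar (elN d) = 0"
    unfolding PX_def prod_ON[OF assms] prod_NO[OF assms] blk_rm blk_add rm_cst_cst rm_cst_add
    by (simp add: blk_zero)
qed

lemma P_NN: "Pgood (2*d) lam' D' qvar (elN d) qvar (elN d)"
  by (rule Pgood_zero) (simp add: PX_def prod_NN)

lemma P_MM: "Pgood (2*d) lam' D' al (elM m d K) al (elM m d K)"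
  by (rule Pgood_zero) (simp add: PX_def prod_MM)

lemma q3: "qvar^(2*m+3) = qvar * qvar^(2*m+2)"
proof -
  have e3: "2*m+3 = Suc (2*m+2)" by simp
  show ?thesis unfolding e3 power_Suc ..
qed

lemma P_OM:
  assumes R: "rm (cst (mu^2)) (mm d E D) = rm (cst (qvar^(2*m+2))) (mm d D E)"
    and K: "K = rm k D"
  shows "Pgood (2*d) lam' D' (qvar*mu) (elO d mu E) (qvar^(2*m+3)) (elM m d K)"
proof (rule Pgood_zero)
  define lam where "lam = qvar^(2*m+2)"
  have "PX (2*d) (qvar*mu) (elO d mu E) (qvar^(2*m+3)) (elM m d K) =
        blk d 0 0 (rm (cst (qvar * mu * (bet mu * cM m))) (mm d E K) + rm (cst (qvar^(2*m+3) * (cM m * alp mu))) (mm d K E)) 0"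
    unfolding PX_def prod_OM prod_MO blk_rm blk_add rm_cst_cst by simp
  also have "rm (cst (qvar * mu * (bet mu * cM m))) (mm d E K) + rm (cst (qvar^(2*m+3) * (cM m * alp mu))) (mm d K E) = 0"
  proof -
    have a: "rm (cst (qvar * mu * (bet mu * cM m))) (mm d E K) = rm (cst (- qvar * alp mu * cM m * lam) * k) (mm d D E)"
    proof -
      have "rm (cst (qvar * mu * (bet mu * cM m))) (mm d E K) = rm (cst (- qvar * alp mu * cM m) * k) (rm (cst (mu^2)) (mm d E D))"
        unfolding K mm_rm_right by (simp add: alp_bet power2_eq_square mult_ac)
      also have "\<dots> = rm (cst (- qvar * alp mu * cM m * lam) * k) (mm d D E)"
        unfolding R lam_def by (simp add: mult_ac)
      finally show ?thesis .
    qed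
    have b: "rm (cst (qvar^(2*m+3) * (cM m * alp mu))) (mm d K E) = rm (cst (qvar * alp mu * cM m * lam) * k) (mm d D E)"
      unfolding K mm_rm_left q3 lam_def by (simp add: mult_ac)
    show ?thesis unfolding a b rm_add_scal by simp
  qed
  finally show "PX (2*d) (qvar*mu) (elO d mu E) (qvar^(2*m+3)) (elM m d K) = 0" by (simp only: blk_zero)
qed

lemma P_NM:
  assumes K: "K = rm k D" and cK: "cln d K"
  shows "Pgood (2*d) (qvar^(2*Suc m+2)) (stepD m d D) qvar (elN d) (qvar^(2*m+3)) (elM m d K)"
proof -
  define t' where "t' = cst (qvar * cN * cM m) * k"
  have "PX (2*d) qvar (elN d) (qvar^(2*m+3)) (elM m d K) = rm t' (stepD m d D)"
    unfolding PX_def prod_NM[OF cK] prod_MN[OF cK] blk_rm blk_add stepD_def t'_def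
    unfolding K q3 by (simp add: mult_ac)
  moreover have "qvar * qvar^(2*m+3) = qvar^(2*Suc m+2)"
    unfolding q3 lam_Suc by (simp add: mult_ac)
  ultimately show ?thesis unfolding Pgood_def by blast
qed

lemma RD_O:
  assumes R: "rm (cst (mu^2)) (mm d E D) = rm (cst (qvar^(2*m+2))) (mm d D E)"
  shows "rm (cst ((qvar*mu)^2)) (mm (2*d) (elO d mu E) (stepD m d D)) = rm (cst (qvar^(2*Suc m+2))) (mm (2*d) (stepD m d D) (elO d mu E))"
proof -
  have a: "rm (cst ((qvar*mu)^2 * c)) (mm d E D) = rm (cst (qvar^(2*Suc m+2) * c)) (mm d D E)" for c
  proof -
    have "rm (cst ((qvar*mu)^2 * c)) (mm d E D) = rm (cst (qvar^2 * c)) (rm (cst (mu^2)) (mm d E D))"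
      by (simp add: power_mult_distrib mult_ac)
    also have "\<dots> = rm (cst (qvar^(2*Suc m+2) * c)) (mm d D E)"
      unfolding R lam_Suc by (simp add: power2_eq_square mult_ac)
    finally show ?thesis .
  qed
  show ?thesis
    unfolding prod_OD prod_DO blk_rm rm_cst_cst
    using a[of "alp mu"] a[of "bet mu * qvar^(2*m+2)"] by (simp add: mult_ac)
qed

lemma RD_N:
  assumes "cln d D"
  shows "rm (cst (qvar^2)) (mm (2*d) (elN d) (stepD m d D)) = rm (cst (qvar^(2*Suc m+2))) (mm (2*d) (stepD m d D) (elN d))"
  unfolding prod_ND[OF assms] prod_DN[OF assms] blk_rm rm_cst_cst lam_Suc
  by (simp add: power2_eq_square mult_ac)

lemma RD_M:
  assumes K: "K = rm k D"
  shows "rm (cst ((qvar^(2*m+3))^2)) (mm (2*d) (elM m d K) (stepD m d D)) = rm (cst (qvar^(2*Suc m+2))) (mm (2*d) (stepD m d D) (elM m d K))"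
proof -
  have "mm d K D = mm d D K" unfolding K mm_rm_left mm_rm_right ..
  moreover have "(qvar^(2*m+3))^2 = qvar^(2*Suc m+2) * qvar^(2*m+2)"
    unfolding q3 lam_Suc by (simp add: power2_eq_square mult_ac)
  ultimately show ?thesis
    unfolding prod_MD prod_DM blk_rm rm_cst_cst by (simp add: mult_ac)
qed

lemma Inv_Pgood:
  assumes "Inv m d L D" "a < length L" "b < length L"
  shows "Pgood d (qvar^(2*m+2)) D (base (fst (L!a))) (snd (L!a)) (base (fst (L!b))) (snd (L!b))"
  using assms unfolding Inv_def Pgood_def PX_def by blast

lemma Inv_RD:
  assumes "Inv m d L D" "a < length L"
  shows "rm (cst ((base (fst (L!a)))^2)) (mm d (snd (L!a)) D) = rm (cst (qvar^(2*m+2))) (mm d D (snd (L!a)))"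
  using assms unfolding Inv_def by blast

lemma Inv_step:
  assumes I: "Inv m d L D"
  shows "Inv (Suc m) (2*d) (stepL m d L) (stepD m d D)"
proof -
  define n where "n = length L"
  define L' where "L' = stepL m d L"
  define D' where "D' = stepD m d D"
  define K where "K = mm d (Xif L 1) (Xif L 0)"
  obtain k where k: "K = rm k D" using geoK(2)[OF I] unfolding K_def by blast
  have cD: "cln d D" using Inv_cln[OF I] by blast
  have cE: "a < n \<Longrightarrow> cln d (snd (L!a))" for a using Inv_cln(2)[OF I] by (simp add: n_def)
  have cK: "cln d K" unfolding K_def by (intro cln_mm cln_Xif) (use cE n_def in auto)
  have len: "length L' = Suc (Suc n)" by (simp add: L'_def stepL_def n_def)
  have nthO: "a < n \<Longrightarrow> L'!a = ((fst (fst (L!a)), Suc (snd (fst (L!a)))), elO d (base (fst (L!a))) (snd (L!a)))" for a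
    by (simp add: L'_def stepL_def nth_append n_def split_beta)
  have nthN: "L'!n = ((1,1), elN d)" by (simp add: L'_def stepL_def nth_append n_def)
  have nthM: "L'!(Suc n) = ((1,2*m+3), elM m d K)" by (simp add: L'_def stepL_def nth_append n_def K_def)
  have bO: "a < n \<Longrightarrow> base (fst (L'!a)) = qvar * base (fst (L!a))" for a
    using nthO by (simp add: base_Suc)
  have bN: "base (fst (L'!n)) = qvar" using nthN by (simp add: base_def)
  have bM: "base (fst (L'!(Suc n))) = qvar^(2*m+3)" using nthM by (simp add: base_def)
  have sO: "a < n \<Longrightarrow> snd (L'!a) = elO d (base (fst (L!a))) (snd (L!a))" for a using nthO by simp
  have sN: "snd (L'!n) = elN d" using nthN by simp
  have sM: "snd (L'!(Suc n)) = elM m d K" using nthM by simp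
  have cases3: "a < Suc (Suc n) \<Longrightarrow> a < n \<or> a = n \<or> a = Suc n" for a by auto
  have RDa: "a < n \<Longrightarrow> rm (cst ((base (fst (L!a)))^2)) (mm d (snd (L!a)) D) = rm (cst (qvar^(2*m+2))) (mm d D (snd (L!a)))" for a
    by (rule Inv_RD[OF I]) (simp add: n_def)
  have c1: "cln (2*d) D'" unfolding D'_def stepD_def by (intro cln_blk cln_rm cD cln_zero)
  have c2: "\<forall>a<length L'. cln (2*d) (snd (L'!a))"
  proof (intro allI impI)
    fix a assume "a < length L'"
    then consider "a < n" | "a = n" | "a = Suc n" using cases3 len by auto
    then show "cln (2*d) (snd (L'!a))"
    proof cases
      case 1 then show ?thesis unfolding sO[OF 1] elO_def by (intro cln_blk cln_rm cE cln_zero)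
    next
      case 2 then have a: "a = n" .
      show ?thesis unfolding a sN elN_def by (simp add: cln_blk cln_rm cln_idm cln_zero)
    next
      case 3 then have a: "a = Suc n" .
      show ?thesis unfolding a sM elM_def by (intro cln_blk cln_rm cK cln_zero)
    qed
  qed
  have c3: "\<forall>a<length L'. (fst (fst (L'!a)) = 1 \<or> fst (fst (L'!a)) = -1) \<and> 1 \<le> snd (fst (L'!a)) \<and> snd (fst (L'!a)) \<le> 2*Suc m+1"
  proof (intro allI impI)
    fix a assume "a < length L'"
    then consider "a < n" | "a = n" | "a = Suc n" using cases3 len by auto
    then show "(fst (fst (L'!a)) = 1 \<or> fst (fst (L'!a)) = -1) \<and> 1 \<le> snd (fst (L'!a)) \<and> snd (fst (L'!a)) \<le> 2*Suc m+1"
    proof cases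
      case 1 then show ?thesis using Inv_shape[OF I, of a] nthO[OF 1] by (simp add: n_def)
    next
      case 2 then show ?thesis using nthN by simp
    next
      case 3 then show ?thesis using nthM by simp
    qed
  qed
  have c4: "\<forall>a<length L'. rm (cst ((base (fst (L'!a)))^2)) (mm (2*d) (snd (L'!a)) D') = rm (cst (qvar^(2*Suc m+2))) (mm (2*d) D' (snd (L'!a)))"
  proof (intro allI impI)
    fix a assume "a < length L'"
    then consider "a < n" | "a = n" | "a = Suc n" using cases3 len by auto
    then show "rm (cst ((base (fst (L'!a)))^2)) (mm (2*d) (snd (L'!a)) D') = rm (cst (qvar^(2*Suc m+2))) (mm (2*d) D' (snd (L'!a)))"
    proof cases
      case 1 show ?thesis unfolding bO[OF 1] sO[OF 1] D'_def
        by (rule RD_O[OF RDa[OF 1]])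
    next
      case 2 then have a: "a = n" .
      show ?thesis unfolding a bN sN D'_def by (rule RD_N[OF cD])
    next
      case 3 then have a: "a = Suc n" .
      show ?thesis unfolding a bM sM D'_def by (rule RD_M[OF k])
    qed
  qed
  have c5: "Pgood (2*d) (qvar^(2*Suc m+2)) D' (base (fst (L'!a))) (snd (L'!a)) (base (fst (L'!b))) (snd (L'!b))"
    if a: "a < length L'" and b: "b < length L'" for a b
  proof -
    have OO: "a < n \<Longrightarrow> b < n \<Longrightarrow> Pgood (2*d) (qvar^(2*Suc m+2)) D' (base (fst (L'!a))) (snd (L'!a)) (base (fst (L'!b))) (snd (L'!b))" for a b
      unfolding bO sO D'_def by (rule P_OO, rule Inv_Pgood[OF I]) (simp_all add: n_def)
    have ON: "a < n \<Longrightarrow> Pgood (2*d) (qvar^(2*Suc m+2)) D' (base (fst (L'!a))) (snd (L'!a)) (base (fst (L'!n))) (snd (L'!n))" for a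
      unfolding bO sO bN sN by (rule P_ON, rule cE)
    have OM: "a < n \<Longrightarrow> Pgood (2*d) (qvar^(2*Suc m+2)) D' (base (fst (L'!a))) (snd (L'!a)) (base (fst (L'!Suc n))) (snd (L'!Suc n))" for a
      unfolding bO sO bM sM by (rule P_OM[OF RDa k])
    have NN: "Pgood (2*d) (qvar^(2*Suc m+2)) D' (base (fst (L'!n))) (snd (L'!n)) (base (fst (L'!n))) (snd (L'!n))"
      unfolding bN sN by (rule P_NN)
    have NM: "Pgood (2*d) (qvar^(2*Suc m+2)) D' (base (fst (L'!n))) (snd (L'!n)) (base (fst (L'!Suc n))) (snd (L'!Suc n))"
      unfolding bN sN bM sM D'_def by (rule P_NM[OF k cK])
    have MM: "Pgood (2*d) (qvar^(2*Suc m+2)) D' (base (fst (L'!Suc n))) (snd (L'!Suc n)) (base (fst (L'!Suc n))) (snd (L'!Suc n))"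
      unfolding bM sM by (rule P_MM)
    consider "a < n" | "a = n" | "a = Suc n" using cases3 len a by auto
    moreover consider "b < n" | "b = n" | "b = Suc n" using cases3 len b by auto
    ultimately show ?thesis
      using OO ON OM NN NM MM Pgood_sym by metis
  qed
  show ?thesis
    unfolding Inv_def L'_def[symmetric] D'_def[symmetric]
    using c1 c2 c3 c4 c5 unfolding Pgood_def PX_def by blast
qed

definition cX :: R where "cX = [:0, 1 / (- qvar - 1):]"

definition L1 :: "((int \<times> nat) \<times> fmat) list" where
  "L1 = [((1,1), rm (cst cN) (idm 1)), ((-1,1), rm cX (idm 1))]"

lemma mm1_rm: "mm 1 (rm a (idm 1)) (rm b (idm 1)) = rm (a*b) (idm 1)"
  by (simp add: mm_rm_left mm_rm_right mm_idm_left cln_idm mult.commute)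

lemma Inv_L1: "Inv 0 1 L1 (idm 1)"
proof -
  have len: "length L1 = 2" by (simp add: L1_def)
  have b0: "base (fst (L1!0)) = qvar" by (simp add: L1_def base_def)
  have b1: "base (fst (L1!1)) = - qvar" by (simp add: L1_def base_def)
  define c where "c a = (if a = (0::nat) then cst cN else cX)" for a
  have s: "a < 2 \<Longrightarrow> snd (L1!a) = rm (c a) (idm 1)" for a
    by (cases a) (auto simp: L1_def c_def)
  have bsq: "a < 2 \<Longrightarrow> (base (fst (L1!a)))^2 = qvar^2" for a
    using b0 b1 by (cases a) (auto simp: less_Suc_eq)
  have cl: "a < 2 \<Longrightarrow> cln 1 (snd (L1!a))" for a using s by (simp add: cln_rm cln_idm)
  have sh: "a < 2 \<Longrightarrow> (fst (fst (L1!a)) = 1 \<or> fst (fst (L1!a)) = -1) \<and> 1 \<le> snd (fst (L1!a)) \<and> snd (fst (L1!a)) \<le> 2*0+1" for a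
    by (cases a) (auto simp: L1_def less_Suc_eq)
  have rd: "a < 2 \<Longrightarrow> rm (cst ((base (fst (L1!a)))^2)) (mm 1 (snd (L1!a)) (idm 1)) = rm (cst (qvar^(2*0+2))) (mm 1 (idm 1) (snd (L1!a)))" for a
    using bsq cl by (simp add: mm_idm_left mm_idm_right power2_eq_square)
  have pr: "\<exists>t. rm (cst (base (fst (L1!a)))) (mm 1 (snd (L1!a)) (snd (L1!b))) + rm (cst (base (fst (L1!b)))) (mm 1 (snd (L1!b)) (snd (L1!a))) = rm t (idm 1)
        \<and> (base (fst (L1!a)) * base (fst (L1!b)) \<noteq> qvar^(2*0+2) \<longrightarrow> t = 0)" if a: "a < 2" and b: "b < 2" for a b
  proof -
    define t where "t = (cst (base (fst (L1!a))) + cst (base (fst (L1!b)))) * (c a * c b)"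
    have eq: "rm (cst (base (fst (L1!a)))) (mm 1 (snd (L1!a)) (snd (L1!b))) + rm (cst (base (fst (L1!b)))) (mm 1 (snd (L1!b)) (snd (L1!a))) = rm t (idm 1)"
      unfolding s[OF a] s[OF b] mm1_rm rm_rm rm_add_scal t_def by (simp add: algebra_simps smult_add_left)
    have "base (fst (L1!a)) * base (fst (L1!b)) \<noteq> qvar^2 \<Longrightarrow> t = 0"
      using a b b0 b1 by (cases a; cases b) (auto simp: t_def less_Suc_eq power2_eq_square)
    then show ?thesis using eq by (auto simp: power2_eq_square)
  qed
  show ?thesis unfolding Inv_def len
    using cl sh rd pr by (simp add: cln_idm)
qed

primrec LL :: "nat \<Rightarrow> ((int \<times> nat) \<times> fmat) list" where
  "LL 0 = L1"
| "LL (Suc m) = stepL m (2^m) (LL m)"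

primrec DD :: "nat \<Rightarrow> fmat" where
  "DD 0 = idm 1"
| "DD (Suc m) = stepD m (2^m) (DD m)"

lemma Inv_LL: "Inv m (2^m) (LL m) (DD m)"
proof (induction m)
  case 0 then show ?case using Inv_L1 by simp
next
  case (Suc m)
  have "Inv (Suc m) (2 * 2^m) (stepL m (2^m) (LL m)) (stepD m (2^m) (DD m))"
    by (rule Inv_step[OF Suc])
  then show ?case by simp
qed

section \<open>Vieta-type expansion of T\<close>

definition phi :: "int \<Rightarrow> R" where "phi l = [:1, (-1) powi l:]"
definition Pphi :: "int list \<Rightarrow> R" where "Pphi ls = (\<Prod>j<length ls. phi (ls!j))"

lemma prod_monom1:
  assumes "finite X"
  shows "(\<Prod>j\<in>X. [:0, f j:]) = monom (\<Prod>j\<in>X. f j) (card X)"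
  using assms
proof (induction X rule: finite_induct)
  case empty then show ?case by (simp add: monom_0 one_pCons)
next
  case (insert x X)
  have "[:0, f x:] = monom (f x) 1" by (simp add: monom_Suc monom_0)
  then show ?case using insert by (simp add: mult_monom)
qed

lemma T_coeff: "T (length ls) p ls = coeff (Pphi ls) p"
proof -
  define n where "n = length ls"
  define A where "A = {..<n}"
  have fA: "finite A" by (simp add: A_def)
  have "Pphi ls = (\<Prod>j\<in>A. [:0, (-1) powi (ls!j):] + 1)"
    unfolding Pphi_def A_def n_def phi_def by (intro prod.cong refl) (simp add: one_pCons)
  also have "\<dots> = (\<Sum>X\<in>Pow A. (\<Prod>j\<in>X. [:0, (-1) powi (ls!j):]) * (\<Prod>j\<in>A-X. 1))"
    by (rule prod_add[OF fA])
  also have "\<dots> = (\<Sum>X\<in>Pow A. monom (\<Prod>j\<in>X. (-1) powi (ls!j)) (card X))"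
    by (intro sum.cong refl) (simp add: prod_monom1 finite_subset[OF _ fA])
  finally have P: "Pphi ls = (\<Sum>X\<in>Pow A. monom (\<Prod>j\<in>X. (-1) powi (ls!j)) (card X))" .
  have "coeff (Pphi ls) p = (\<Sum>X\<in>Pow A. if card X = p then (\<Prod>j\<in>X. (-1) powi (ls!j)) else 0)"
    unfolding P coeff_sum by (intro sum.cong refl) (simp add: coeff_monom)
  also have "\<dots> = (\<Sum>X\<in>{X\<in>Pow A. card X = p}. \<Prod>j\<in>X. (-1) powi (ls!j))"
    by (simp add: sum.inter_filter[symmetric] fA)
  also have "{X\<in>Pow A. card X = p} = {J. J \<subseteq> {0..<n} \<and> card J = p}"
    by (auto simp: A_def)
  finally show ?thesis by (simp add: T_def n_def)
qed

definition H1 :: "int \<Rightarrow> fmat" where "H1 l = rm (smult (qvar powi l) (phi l)) (idm 1)"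

lemma chainL_H1: "chainL 1 H1 ls = rm (smult (qvar powi (sum_list ls)) (Pphi ls)) (idm 1)"
proof (induction ls)
  case Nil then show ?case by (simp add: chainL_def Pphi_def cst_1)
next
  case (Cons l ls)
  have "Pphi (l # ls) = phi l * Pphi ls"
    unfolding Pphi_def length_Cons prod.lessThan_Suc_shift by simp
  moreover have "qvar powi (l + sum_list ls) = qvar powi l * qvar powi (sum_list ls)"
    using qvar_ne0 by (simp add: power_int_add)
  ultimately show ?case using Cons
    by (simp add: chainL_def H1_def mm_rm_left mm_rm_right mm_idm_left cln_idm mult_ac)
qed

lemma Xif_L1: "Xif L1 x = rm (cst (qvar powi x * cN) + cst ((- qvar) powi x) * cX) (idm 1)"
proof -
  have "Xif L1 x = rm (cst (qvar powi x)) (rm (cst cN) (idm 1)) + rm (cst ((- qvar) powi x)) (rm cX (idm 1))"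
    by (simp add: Xif_def L1_def base_def numeral_2_eq_2)
  then show ?thesis by (simp add: rm_add_scal mult_ac)
qed

lemma delta_L1: "Xif L1 (x+1) - Xif L1 x = H1 x"
proof -
  have q1: "qvar - 1 \<noteq> 0" using q_ne1 by simp
  have q2: "- qvar - 1 \<noteq> 0" using base_ne1[of "-1" 1] by (simp add: base_def)
  have mx: "qvar powi (x+1) = qvar powi x * qvar" using qvar_ne0 by (simp add: power_int_add_1)
  have mx2: "(- qvar) powi (x+1) = (- qvar) powi x * (- qvar)" using qvar_ne0 by (simp add: power_int_add_1)
  have e1: "qvar powi (x+1) * cN - qvar powi x * cN = qvar powi x"
  proof -
    have "(qvar - 1) * cN = 1" using q1 by (simp add: cN_def)
    moreover have r: "y * a * cc - y * cc = y * ((a - 1) * cc)" for y a cc :: ratfun by (simp add: algebra_simps)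
    ultimately show ?thesis unfolding mx r by simp
  qed
  have e2: "cst ((- qvar) powi (x+1)) * cX - cst ((- qvar) powi x) * cX = [:0, qvar powi x * (-1) powi x:]"
  proof -
    have "(- qvar) powi (x+1) * (1 / (- qvar - 1)) - (- qvar) powi x * (1 / (- qvar - 1)) = (- qvar) powi x"
    proof -
      have h: "(- qvar - 1) * (1 / (- qvar - 1)) = 1" using q2 by simp
      have r: "y * a * cc - y * cc = y * ((a - 1) * cc)" for y a cc :: ratfun by (simp add: algebra_simps)
      show ?thesis unfolding mx2 r h by simp
    qed
    moreover have "(- qvar) powi x = qvar powi x * (-1) powi x"
      using power_int_mult_distrib[of "-1" qvar x] by (simp add: mult.commute)
    ultimately show ?thesis by (simp add: cX_def)
  qed
  have "Xif L1 (x+1) - Xif L1 x = rm (cst (qvar powi (x+1) * cN - qvar powi x * cN) + (cst ((- qvar) powi (x+1)) * cX - cst ((- qvar) powi x) * cX)) (idm 1)"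
  proof -
    have r: "(a1 + b1) - (a0 + b0) = (a1 - a0) + (b1 - b0)" for a1 b1 a0 b0 :: R by simp
    show ?thesis unfolding Xif_L1 rm_diff_scal r cst_diff ..
  qed
  also have "\<dots> = H1 x" unfolding e1 e2 H1_def phi_def by simp
  finally show ?thesis .
qed

definition Fm :: "nat \<Rightarrow> ((int \<times> nat) \<times> fmat) list \<Rightarrow> int \<Rightarrow> fmat" where
  "Fm d L a = blk d (- Xif L a) (idm d) 0 0"
definition Gm :: "nat \<Rightarrow> ((int \<times> nat) \<times> fmat) list \<Rightarrow> int \<Rightarrow> fmat" where
  "Gm d L b = blk d (idm d) 0 (Xif L (b+1)) 0"

primrec UV :: "nat \<Rightarrow> int \<Rightarrow> fmat \<times> fmat" where
  "UV 0 c = (idm 1, idm 1)"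
| "UV (Suc m) c = (mm (2*2^m) (blk (2^m) (fst (UV m c)) 0 0 0) (Fm (2^m) (LL m) 0),
                   mm (2*2^m) (Gm (2^m) (LL m) c) (blk (2^m) (snd (UV m c)) 0 0 0))"

definition Mf :: "nat \<Rightarrow> int \<Rightarrow> int \<Rightarrow> fmat" where
  "Mf m a b = Xif (LL m) (b+1) - Xif (LL m) a"

definition bnds :: "int \<Rightarrow> int list \<Rightarrow> (int \<times> int) list" where
  "bnds c ks = zip (0 # ks) (ks @ [c])"

definition Gpoly :: "nat \<Rightarrow> int \<Rightarrow> int list \<Rightarrow> R" where
  "Gpoly m c ks = (mm (2^m) (mm (2^m) (fst (UV m c)) (chainM (2^m) (Mf m) (bnds c ks))) (snd (UV m c))) 0 0"

lemma cln_LL: "a < length (LL m) \<Longrightarrow> cln (2^m) (snd (LL m ! a))"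
  using Inv_cln(2)[OF Inv_LL] by blast

lemma cln_XifLL: "cln (2^m) (Xif (LL m) x)"
  by (rule cln_Xif) (use cln_LL in blast)

lemma cln_Mf: "cln (2^m) (Mf m a b)"
  unfolding Mf_def by (intro cln_diff cln_XifLL)

lemma cln_chainM: "(\<And>a b. cln d (M a b)) \<Longrightarrow> cln d (chainM d M bs)"
  unfolding chainM_def by (induction bs) (auto intro: cln_mm cln_idm)

lemma cln_chainL: "(\<And>l. cln d (H l)) \<Longrightarrow> cln d (chainL d H ls)"
  unfolding chainL_def by (induction ls) (auto intro: cln_mm cln_idm)

lemma cln_Fm: "cln (2^m) (Xif L a) \<Longrightarrow> cln (2*2^m) (Fm (2^m) L a)"
  unfolding Fm_def by (intro cln_blk cln_uminus cln_idm cln_zero)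

lemma cln_Gm: "cln (2^m) (Xif L (b+1)) \<Longrightarrow> cln (2*2^m) (Gm (2^m) L b)"
  unfolding Gm_def by (intro cln_blk cln_idm cln_zero)

lemma cln_UV: "cln (2^m) (fst (UV m c)) \<and> cln (2^m) (snd (UV m c))"
proof (induction m)
  case 0 then show ?case by (simp add: cln_idm)
next
  case (Suc m)
  have "cln (2*2^m) (fst (UV (Suc m) c))"
    by (simp, intro cln_mm cln_blk cln_Fm cln_XifLL) (use Suc in \<open>auto simp: cln_zero\<close>)
  moreover have "cln (2*2^m) (snd (UV (Suc m) c))"
    by (simp, intro cln_mm cln_blk cln_Gm cln_XifLL) (use Suc in \<open>auto simp: cln_zero\<close>)
  ultimately show ?case by simp
qed

lemma FmGm: "cln d (Xif L a) \<Longrightarrow> cln d (Xif L (b+1)) \<Longrightarrow>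
  mm (2*d) (Fm d L a) (Gm d L b) = blk d (Xif L (b+1) - Xif L a) 0 0 0"
  unfolding Fm_def Gm_def blk_mult by (simp add: mm_idm_left mm_idm_right mm_uminus_left)

lemma GmFm: "cln d (Xif L a) \<Longrightarrow> cln d (Xif L (a+1)) \<Longrightarrow>
  mm (2*d) (Gm d L a) (Fm d L a) = blk d (- Xif L a) (idm d) (- mm d (Xif L (a+1)) (Xif L a)) (Xif L (a+1))"
  unfolding Fm_def Gm_def blk_mult by (simp add: mm_idm_left mm_idm_right mm_uminus_right cln_idm)

lemma emb_chain:
  assumes "cln d X" "\<And>a b. cln d (M a b)"
  shows "mm (2*d) (blk d X 0 0 0) (chainM (2*d) (\<lambda>a b. blk d (M a b) 0 0 0) bs) = blk d (mm d X (chainM d M bs)) 0 0 0"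
  using assms(1)
proof (induction bs arbitrary: X)
  case Nil
  have c: "cln (2*d) (blk d X 0 0 0)" by (intro cln_blk Nil cln_zero)
  have e: "chainM k M' [] = idm k" for k M' by (simp add: chainM_def)
  show ?case unfolding e mm_idm_right[OF c] mm_idm_right[OF Nil] ..
next
  case (Cons ab bs)
  have "mm (2*d) (blk d X 0 0 0) (chainM (2*d) (\<lambda>a b. blk d (M a b) 0 0 0) (ab # bs))
      = mm (2*d) (mm (2*d) (blk d X 0 0 0) (blk d (M (fst ab) (snd ab)) 0 0 0)) (chainM (2*d) (\<lambda>a b. blk d (M a b) 0 0 0) bs)"
    by (simp add: chainM_def mm_assoc)
  also have "\<dots> = mm (2*d) (blk d (mm d X (M (fst ab) (snd ab))) 0 0 0) (chainM (2*d) (\<lambda>a b. blk d (M a b) 0 0 0) bs)"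
    by (simp add: blk_mult)
  also have "\<dots> = blk d (mm d (mm d X (M (fst ab) (snd ab))) (chainM d M bs)) 0 0 0"
    by (rule Cons.IH) (intro cln_mm Cons.prems assms(2))
  also have "\<dots> = blk d (mm d X (chainM d M (ab # bs))) 0 0 0"
    by (simp add: chainM_def mm_assoc)
  finally show ?case .
qed

lemma chain_factor:
  assumes cF: "\<And>a. cln d (F a)" and cG: "\<And>b. cln d (G b)"
  shows "chainM d (\<lambda>a b. mm d (F a) (G b)) (zip (a # ls) (ls @ [c])) =
         mm d (F a) (mm d (chainL d (\<lambda>l. mm d (G l) (F l)) ls) (G c))"
proof (induction ls arbitrary: a)
  case Nil
  show ?case by (simp add: chainM_def chainL_def mm_idm_right mm_idm_left cln_mm cF cG)
next
  case (Cons l ls)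
  have "chainM d (\<lambda>a b. mm d (F a) (G b)) (zip (a # l # ls) ((l # ls) @ [c]))
      = mm d (mm d (F a) (G l)) (chainM d (\<lambda>a b. mm d (F a) (G b)) (zip (l # ls) (ls @ [c])))"
    by (simp add: chainM_def)
  also have "\<dots> = mm d (mm d (F a) (G l)) (mm d (F l) (mm d (chainL d (\<lambda>l. mm d (G l) (F l)) ls) (G c)))"
    by (simp only: Cons.IH)
  also have "\<dots> = mm d (F a) (mm d (chainL d (\<lambda>l. mm d (G l) (F l)) (l # ls)) (G c))"
    by (simp add: chainL_def mm_assoc)
  finally show ?case .
qed

lemma chainL_rm:
  "rm (cst (qvar powi (sum_list ls))) (chainL d G ls) = chainL d (\<lambda>l. rm (cst (qvar powi l)) (G l)) ls"
proof (induction ls)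
  case Nil then show ?case by (simp add: chainL_def cst_1)
next
  case (Cons l ls)
  have "qvar powi (l + sum_list ls) = qvar powi l * qvar powi (sum_list ls)"
    using qvar_ne0 by (simp add: power_int_add)
  then show ?case using Cons[symmetric]
    by (simp add: chainL_def mm_rm_left mm_rm_right rm_cst_cst mult.commute)
qed

lemma gsum_H1: "gsum H1 a b = Mf 0 a b"
  unfolding Mf_def LL.simps by (rule gsum_tele) (rule delta_L1)

definition Hs :: "nat \<Rightarrow> int \<Rightarrow> fmat" where
  "Hs m l = rm (cst (qvar powi l)) (mm (2*2^m) (Gm (2^m) (LL m) l) (Fm (2^m) (LL m) l))"

lemma gsum_Hs: "gsum (Hs m) a b = Mf (Suc m) a b"
proof -
  have "Xif (LL (Suc m)) (x+1) - Xif (LL (Suc m)) x = Hs m x" for x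
    unfolding LL.simps Hs_def delta_step[OF Inv_LL] GmFm[OF cln_XifLL cln_XifLL] ..
  then show ?thesis unfolding Mf_def by (rule gsum_tele)
qed

lemma len_bnds: "length (bnds c ks) = Suc (length ks)"
  by (simp add: bnds_def)

lemma coeff_mult_cst: "coeff (P * cst a) p = coeff P p * a"
  by (simp add: mult.commute)

lemma GS:
  "Gpoly m c ls * cst (qvar powi (sum_list ls)) =
   (mm (2*2^m) (mm (2*2^m) (fst (UV (Suc m) c)) (chainL (2*2^m) (Hs m) ls)) (snd (UV (Suc m) c))) 0 0"
proof -
  define d where "d = (2::nat)^m"
  define U where "U = fst (UV m c)"
  define V where "V = snd (UV m c)"
  define L where "L = LL m"
  define C where "C = chainM d (Mf m) (bnds c ls)"
  define P where "P = chainL (2*d) (\<lambda>l. mm (2*d) (Gm d L l) (Fm d L l)) ls"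
  have d0: "0 < d" by (simp add: d_def)
  have cU: "cln d U" and cV: "cln d V" using cln_UV[of m c] by (simp_all add: U_def V_def d_def)
  have cM: "\<And>a b. cln d (Mf m a b)" using cln_Mf by (simp add: d_def)
  have cX: "\<And>x. cln d (Xif L x)" using cln_XifLL by (simp add: d_def L_def)
  have cF: "\<And>a. cln (2*d) (Fm d L a)" unfolding Fm_def by (intro cln_blk cln_uminus cln_idm cln_zero cX)
  have cG: "\<And>b. cln (2*d) (Gm d L b)" unfolding Gm_def by (intro cln_blk cln_idm cln_zero cX)
  have MF1: "blk d (Mf m a b) 0 0 0 = mm (2*d) (Fm d L a) (Gm d L b)" for a b
    unfolding Mf_def L_def[symmetric] by (rule FmGm[OF cX cX, symmetric])
  have MF: "(\<lambda>a b. blk d (Mf m a b) 0 0 0) = (\<lambda>a b. mm (2*d) (Fm d L a) (Gm d L b))"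
    by (simp only: MF1)
  have "Gpoly m c ls = (blk d (mm d (mm d U C) V) 0 0 0) 0 0"
    using d0 by (simp add: Gpoly_def blk_def U_def V_def C_def d_def)
  also have "blk d (mm d (mm d U C) V) 0 0 0 = mm (2*d) (blk d (mm d U C) 0 0 0) (blk d V 0 0 0)"
    by (simp add: blk_mult)
  also have "blk d (mm d U C) 0 0 0 = mm (2*d) (blk d U 0 0 0) (chainM (2*d) (\<lambda>a b. blk d (Mf m a b) 0 0 0) (bnds c ls))"
    unfolding C_def by (rule emb_chain[symmetric, OF cU cM])
  also have "chainM (2*d) (\<lambda>a b. blk d (Mf m a b) 0 0 0) (bnds c ls) = mm (2*d) (Fm d L 0) (mm (2*d) P (Gm d L c))"
    unfolding MF bnds_def P_def by (rule chain_factor[OF cF cG])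
  finally have G1: "Gpoly m c ls = (mm (2*d) (mm (2*d) (mm (2*d) (blk d U 0 0 0) (Fm d L 0)) P) (mm (2*d) (Gm d L c) (blk d V 0 0 0))) 0 0"
    by (simp only: mm_assoc)
  have U': "fst (UV (Suc m) c) = mm (2*d) (blk d U 0 0 0) (Fm d L 0)"
    by (simp add: U_def d_def L_def)
  have V': "snd (UV (Suc m) c) = mm (2*d) (Gm d L c) (blk d V 0 0 0)"
    by (simp add: V_def d_def L_def)
  have HP: "rm (cst (qvar powi (sum_list ls))) P = chainL (2*d) (Hs m) ls"
    unfolding P_def chainL_rm Hs_def d_def L_def ..
  have "Gpoly m c ls * cst (qvar powi (sum_list ls)) =
        (rm (cst (qvar powi (sum_list ls))) (mm (2*d) (mm (2*d) (fst (UV (Suc m) c)) P) (snd (UV (Suc m) c)))) 0 0"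
    unfolding G1 U' V' by (simp add: rm_def mult.commute)
  also have "\<dots> = (mm (2*d) (mm (2*d) (fst (UV (Suc m) c)) (chainL (2*d) (Hs m) ls)) (snd (UV (Suc m) c))) 0 0"
  proof -
    have "rm (cst (qvar powi (sum_list ls))) (mm (2*d) (mm (2*d) (fst (UV (Suc m) c)) P) (snd (UV (Suc m) c)))
        = mm (2*d) (mm (2*d) (fst (UV (Suc m) c)) (rm (cst (qvar powi (sum_list ls))) P)) (snd (UV (Suc m) c))"
      by (simp only: mm_rm_left mm_rm_right)
    then show ?thesis unfolding HP by simp
  qed
  finally show ?thesis by (simp add: d_def)
qed

lemma Gq_Gpoly:
  "Suc m \<le> n \<Longrightarrow> length ks = n - Suc m \<Longrightarrow> Gq qvar (Suc m) n c (T n p) ks = coeff (Gpoly m c ks) p"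
proof (induction m arbitrary: ks)
  case 0
  define bs where "bs = bnds c ks"
  have lb: "length bs = n" using 0 by (simp add: bs_def len_bnds)
  have "Gq qvar (Suc 0) n c (T n p) ks = nsum (\<lambda>ls. T n p ls * qvar powi (sum_list ls)) bs"
    by (simp add: bs_def bnds_def)
  also have "\<dots> = nsum (\<lambda>ls. coeff ((chainL 1 H1 ls) 0 0) p) bs"
  proof (rule nsum_cong)
    fix ls :: "int list" assume "length ls = length bs"
    then have e: "T n p ls = T (length ls) p ls" using lb by simp
    have "coeff ((chainL 1 H1 ls) 0 0) p = qvar powi (sum_list ls) * coeff (Pphi ls) p"
      unfolding chainL_H1 by (simp add: rm_def idm_def)
    then show "T n p ls * qvar powi (sum_list ls) = coeff ((chainL 1 H1 ls) 0 0) p"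
      unfolding e T_coeff by (simp add: mult.commute)
  qed
  also have "\<dots> = coeff (nsum (\<lambda>ls. (chainL 1 H1 ls) 0 0) bs) p"
    by (rule nsum_morph[where h="\<lambda>P. coeff P p"]) (simp add: coeff_add)
  also have "nsum (\<lambda>ls. (chainL 1 H1 ls) 0 0) bs = (chainM 1 (\<lambda>a b. gsum H1 a b) bs) 0 0"
    by (rule nsum_chain[where Fn="\<lambda>X. X 0 0"]) simp
  also have "(\<lambda>a b. gsum H1 a b) = Mf 0" by (simp only: gsum_H1)
  also have "(chainM 1 (Mf 0) bs) 0 0 = Gpoly 0 c ks"
  proof -
    have "cln 1 (chainM 1 (Mf 0) bs)" by (rule cln_chainM) (use cln_Mf[of 0] in simp)
    then show ?thesis by (simp add: Gpoly_def bs_def mm_idm_left mm_idm_right)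
  qed
  finally show ?case .
next
  case (Suc m)
  define bs where "bs = bnds c ks"
  have lb: "length bs = n - Suc m" using Suc.prems by (simp add: bs_def len_bnds)
  have "Gq qvar (Suc (Suc m)) n c (T n p) ks = nsum (\<lambda>ls. Gq qvar (Suc m) n c (T n p) ls * qvar powi (sum_list ls)) bs"
    by (simp add: bs_def bnds_def)
  also have "\<dots> = nsum (\<lambda>ls. coeff (Gpoly m c ls * cst (qvar powi (sum_list ls))) p) bs"
  proof (rule nsum_cong)
    fix ls :: "int list" assume "length ls = length bs"
    then have "Gq qvar (Suc m) n c (T n p) ls = coeff (Gpoly m c ls) p"
      using Suc.IH[of ls] Suc.prems lb by simp
    then show "Gq qvar (Suc m) n c (T n p) ls * qvar powi (sum_list ls) = coeff (Gpoly m c ls * cst (qvar powi (sum_list ls))) p"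
      by (simp add: coeff_mult_cst)
  qed
  also have "\<dots> = coeff (nsum (\<lambda>ls. Gpoly m c ls * cst (qvar powi (sum_list ls))) bs) p"
    by (rule nsum_morph[where h="\<lambda>P. coeff P p"]) (simp add: coeff_add)
  also have "nsum (\<lambda>ls. Gpoly m c ls * cst (qvar powi (sum_list ls))) bs
     = nsum (\<lambda>ls. (mm (2*2^m) (mm (2*2^m) (fst (UV (Suc m) c)) (chainL (2*2^m) (Hs m) ls)) (snd (UV (Suc m) c))) 0 0) bs"
    by (simp only: GS)
  also have "\<dots> = (mm (2*2^m) (mm (2*2^m) (fst (UV (Suc m) c)) (chainM (2*2^m) (\<lambda>a b. gsum (Hs m) a b) bs)) (snd (UV (Suc m) c))) 0 0"
    by (rule nsum_chain[where Fn="\<lambda>X. (mm (2*2^m) (mm (2*2^m) (fst (UV (Suc m) c)) X) (snd (UV (Suc m) c))) 0 0"])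
       (simp add: mm_add_right mm_add_left)
  also have "(\<lambda>a b. gsum (Hs m) a b) = Mf (Suc m)" by (simp only: gsum_Hs)
  finally show ?case by (simp add: Gpoly_def bs_def)
qed

definition sgnok :: "int \<times> nat \<Rightarrow> bool" where "sgnok b \<longleftrightarrow> fst b = 1 \<or> fst b = -1"

definition mon :: "(int \<times> nat) list \<Rightarrow> int list \<Rightarrow> ratfun" where
  "mon bs X = (\<Prod>j<length bs. base (bs!j) powi (X!j))"

definition EPR :: "nat \<Rightarrow> nat \<Rightarrow> nat \<Rightarrow> (int list \<Rightarrow> R) \<Rightarrow> bool" where
  "EPR N i D f \<longleftrightarrow> (\<exists>Ts :: (R \<times> (int \<times> nat) list) list.
     (\<forall>t\<in>set Ts. length (snd t) = N \<and> (\<forall>j<N. sgnok (snd t ! j)) \<and> (i < N \<longrightarrow> snd (snd t ! i) \<le> D)) \<and>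
     (\<forall>X. length X = N \<longrightarrow> f X = (\<Sum>t\<leftarrow>Ts. smult (mon (snd t) X) (fst t))))"

lemma sl_concat: "sum_list (concat (map (\<lambda>x. map (h x) ys) xs)) = (\<Sum>x\<leftarrow>xs. \<Sum>y\<leftarrow>ys. h x y)"
  by (induct xs) simp_all

lemma sl_concat2: "(\<Sum>t\<leftarrow>concat (map (\<lambda>x. map (h x) ys) xs). F t) = (\<Sum>x\<leftarrow>xs. \<Sum>y\<leftarrow>ys. F (h x y))"
  by (induct xs) (simp_all add: o_def)

lemma sl_mult: "(\<Sum>x\<leftarrow>xs. f x) * (\<Sum>y\<leftarrow>ys. g y) = (\<Sum>x\<leftarrow>xs. \<Sum>y\<leftarrow>ys. f x * (g y :: R))"
proof -
  have "(\<Sum>x\<leftarrow>xs. f x) * (\<Sum>y\<leftarrow>ys. g y) = (\<Sum>x\<leftarrow>xs. f x * (\<Sum>y\<leftarrow>ys. g y))"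
    by (rule sum_list_mult_const[symmetric])
  also have "\<dots> = (\<Sum>x\<leftarrow>xs. \<Sum>y\<leftarrow>ys. f x * g y)"
    by (simp only: sum_list_const_mult[symmetric])
  finally show ?thesis .
qed

lemma EPR_mono: "EPR N i D f \<Longrightarrow> D \<le> D' \<Longrightarrow> EPR N i D' f"
  unfolding EPR_def by (meson order_trans)

lemma EPR_add: "EPR N i D f \<Longrightarrow> EPR N i D g \<Longrightarrow> EPR N i D (\<lambda>X. f X + g X)"
proof -
  assume "EPR N i D f" "EPR N i D g"
  then obtain T1 T2 where
    T1: "\<forall>t\<in>set T1. length (snd t) = N \<and> (\<forall>j<N. sgnok (snd t ! j)) \<and> (i < N \<longrightarrow> snd (snd t ! i) \<le> D)"
        "\<forall>X. length X = N \<longrightarrow> f X = (\<Sum>t\<leftarrow>T1. smult (mon (snd t) X) (fst t))" and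
    T2: "\<forall>t\<in>set T2. length (snd t) = N \<and> (\<forall>j<N. sgnok (snd t ! j)) \<and> (i < N \<longrightarrow> snd (snd t ! i) \<le> D)"
        "\<forall>X. length X = N \<longrightarrow> g X = (\<Sum>t\<leftarrow>T2. smult (mon (snd t) X) (fst t))"
    unfolding EPR_def by blast
  show ?thesis unfolding EPR_def
    by (rule exI[of _ "T1 @ T2"]) (use T1 T2 in auto)
qed

lemma EPR_uminus: "EPR N i D f \<Longrightarrow> EPR N i D (\<lambda>X. - f X)"
proof -
  assume "EPR N i D f"
  then obtain T1 where
    T1: "\<forall>t\<in>set T1. length (snd t) = N \<and> (\<forall>j<N. sgnok (snd t ! j)) \<and> (i < N \<longrightarrow> snd (snd t ! i) \<le> D)"
        "\<forall>X. length X = N \<longrightarrow> f X = (\<Sum>t\<leftarrow>T1. smult (mon (snd t) X) (fst t))"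
    unfolding EPR_def by blast
  show ?thesis unfolding EPR_def
  proof (rule exI[of _ "map (\<lambda>t. (- fst t, snd t)) T1"], intro conjI allI impI)
    fix X :: "int list" assume "length X = N"
    then show "- f X = (\<Sum>t\<leftarrow>map (\<lambda>t. (- fst t, snd t)) T1. smult (mon (snd t) X) (fst t))"
      using T1(2) by (simp add: o_def uminus_sum_list_map)
  qed (use T1 in auto)
qed

lemma EPR_diff: "EPR N i D f \<Longrightarrow> EPR N i D g \<Longrightarrow> EPR N i D (\<lambda>X. f X - g X)"
  using EPR_add[of N i D f "\<lambda>X. - g X"] EPR_uminus[of N i D g] by simp

lemma EPR_zero: "EPR N i D (\<lambda>X. 0)"
  unfolding EPR_def by (rule exI[of _ "[]"]) simp

lemma mon_const: "mon (replicate N (1,0)) X = 1"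
  by (simp add: mon_def base_def)

lemma EPR_const: "EPR N i D (\<lambda>X. c)"
  unfolding EPR_def
  by (rule exI[of _ "[(c, replicate N (1,0))]"]) (auto simp: sgnok_def mon_const)

definition bmul :: "int \<times> nat \<Rightarrow> int \<times> nat \<Rightarrow> int \<times> nat" where
  "bmul b1 b2 = (fst b1 * fst b2, snd b1 + snd b2)"

lemma base_bmul: "base (bmul b1 b2) = base b1 * base b2"
  by (simp add: base_def bmul_def power_add)

lemma sgnok_bmul: "sgnok b1 \<Longrightarrow> sgnok b2 \<Longrightarrow> sgnok (bmul b1 b2)"
  by (auto simp: sgnok_def bmul_def)

lemma mon_mult:
  assumes "length b1 = N" "length b2 = N"
  shows "mon b1 X * mon b2 X = mon (map2 bmul b1 b2) X"
proof -
  have "mon b1 X * mon b2 X = (\<Prod>j<N. base (b1!j) powi (X!j) * base (b2!j) powi (X!j))"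
    using assms by (simp add: mon_def prod.distrib)
  also have "\<dots> = (\<Prod>j<N. base (bmul (b1!j) (b2!j)) powi (X!j))"
    by (simp add: base_bmul power_int_mult_distrib)
  also have "\<dots> = mon (map2 bmul b1 b2) X"
    using assms by (simp add: mon_def)
  finally show ?thesis .
qed

lemma EPR_mult: "EPR N i D1 f \<Longrightarrow> EPR N i D2 g \<Longrightarrow> EPR N i (D1 + D2) (\<lambda>X. f X * g X)"
proof -
  assume "EPR N i D1 f" "EPR N i D2 g"
  then obtain T1 T2 where
    T1: "\<forall>t\<in>set T1. length (snd t) = N \<and> (\<forall>j<N. sgnok (snd t ! j)) \<and> (i < N \<longrightarrow> snd (snd t ! i) \<le> D1)"
        "\<forall>X. length X = N \<longrightarrow> f X = (\<Sum>t\<leftarrow>T1. smult (mon (snd t) X) (fst t))" and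
    T2: "\<forall>t\<in>set T2. length (snd t) = N \<and> (\<forall>j<N. sgnok (snd t ! j)) \<and> (i < N \<longrightarrow> snd (snd t ! i) \<le> D2)"
        "\<forall>X. length X = N \<longrightarrow> g X = (\<Sum>t\<leftarrow>T2. smult (mon (snd t) X) (fst t))"
    unfolding EPR_def by blast
  define h where "h t1 t2 = (fst t1 * fst t2, map2 bmul (snd t1) (snd t2))" for t1 t2 :: "R \<times> (int \<times> nat) list"
  define T where "T = concat (map (\<lambda>t1. map (h t1) T2) T1)"
  show ?thesis unfolding EPR_def
  proof (rule exI[of _ T], rule conjI; (intro ballI allI impI)?)
    fix t assume "t \<in> set T"
    then obtain t1 t2 where t: "t1 \<in> set T1" "t2 \<in> set T2" "t = h t1 t2" by (auto simp: T_def)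
    then have l1: "length (snd t1) = N" and l2: "length (snd t2) = N" using T1 T2 by auto
    have nth: "j < N \<Longrightarrow> snd t ! j = bmul (snd t1 ! j) (snd t2 ! j)" for j
      using t l1 l2 by (simp add: h_def)
    show "length (snd t) = N \<and> (\<forall>j<N. sgnok (snd t ! j)) \<and> (i < N \<longrightarrow> snd (snd t ! i) \<le> D1 + D2)"
    proof (intro conjI allI impI)
      show "length (snd t) = N" using t l1 l2 by (simp add: h_def)
    next
      fix j assume j: "j < N"
      show "sgnok (snd t ! j)" unfolding nth[OF j]
        by (rule sgnok_bmul) (use t T1(1) T2(1) j in auto)
    next
      assume i: "i < N"
      have "snd (snd t1 ! i) \<le> D1" "snd (snd t2 ! i) \<le> D2" using t T1(1) T2(1) i by auto
      then show "snd (snd t ! i) \<le> D1 + D2" unfolding nth[OF i] bmul_def by simp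
    qed
  next
    fix X :: "int list" assume X: "length X = N"
    have "f X * g X = (\<Sum>t1\<leftarrow>T1. \<Sum>t2\<leftarrow>T2. smult (mon (snd t1) X) (fst t1) * smult (mon (snd t2) X) (fst t2))"
      using X T1(2) T2(2) by (simp add: sl_mult)
    also have "\<dots> = (\<Sum>t1\<leftarrow>T1. \<Sum>t2\<leftarrow>T2. smult (mon (snd (h t1 t2)) X) (fst (h t1 t2)))"
    proof (intro arg_cong[where f=sum_list] map_cong refl)
      fix t1 t2 assume "t1 \<in> set T1" "t2 \<in> set T2"
      then have l1: "length (snd t1) = N" and l2: "length (snd t2) = N" using T1 T2 by auto
      show "smult (mon (snd t1) X) (fst t1) * smult (mon (snd t2) X) (fst t2) = smult (mon (snd (h t1 t2)) X) (fst (h t1 t2))"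
        using mon_mult[OF l1 l2, of X] by (simp add: h_def mult.commute)
    qed
    also have "\<dots> = (\<Sum>t\<leftarrow>T. smult (mon (snd t) X) (fst t))"
      unfolding T_def by (rule sl_concat2[symmetric])
    finally show "f X * g X = (\<Sum>t\<leftarrow>T. smult (mon (snd t) X) (fst t))" .
  qed
qed

section \<open>One-variable exponential sums and lifting\<close>

definition EP1 :: "nat \<Rightarrow> (int \<Rightarrow> R) \<Rightarrow> bool" where
  "EP1 D h \<longleftrightarrow> (\<exists>T :: (R \<times> (int \<times> nat)) list. (\<forall>t\<in>set T. sgnok (snd t) \<and> snd (snd t) \<le> D) \<and>
      (\<forall>x. h x = (\<Sum>t\<leftarrow>T. smult (base (snd t) powi x) (fst t))))"

lemma base_ne0': "sgnok b \<Longrightarrow> base b \<noteq> 0"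
  using base_ne0[of "fst b" "snd b"] by (simp add: sgnok_def)

lemma EP1_shift: "EP1 D h \<Longrightarrow> EP1 D (\<lambda>x. h (x + k))"
proof -
  assume "EP1 D h"
  then obtain T where T: "\<forall>t\<in>set T. sgnok (snd t) \<and> snd (snd t) \<le> D"
    "\<forall>x. h x = (\<Sum>t\<leftarrow>T. smult (base (snd t) powi x) (fst t))" unfolding EP1_def by blast
  show ?thesis unfolding EP1_def
  proof (rule exI[of _ "map (\<lambda>t. (smult (base (snd t) powi k) (fst t), snd t)) T"], intro conjI allI ballI)
    fix x
    have "h (x + k) = (\<Sum>t\<leftarrow>T. smult (base (snd t) powi (x + k)) (fst t))" using T(2) by simp
    also have "\<dots> = (\<Sum>t\<leftarrow>T. smult (base (snd t) powi x) (smult (base (snd t) powi k) (fst t)))"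
    proof (intro arg_cong[where f=sum_list] map_cong refl)
      fix t assume "t \<in> set T"
      then have "base (snd t) \<noteq> 0" using T(1) base_ne0' by blast
      then show "smult (base (snd t) powi (x + k)) (fst t) = smult (base (snd t) powi x) (smult (base (snd t) powi k) (fst t))"
        by (simp add: power_int_add)
    qed
    finally show "h (x + k) = (\<Sum>t\<leftarrow>map (\<lambda>t. (smult (base (snd t) powi k) (fst t), snd t)) T. smult (base (snd t) powi x) (fst t))"
      by (simp add: o_def)
  qed (use T in auto)
qed

lemma mon_single:
  assumes "j < N"
  shows "mon ((replicate N (1,0))[j := b]) X = base b powi (X!j)"
proof -
  have "mon ((replicate N (1,0))[j := b]) X = (\<Prod>k<N. if k = j then base b powi (X!j) else 1)"
    unfolding mon_def by (intro prod.cong) (auto simp: nth_list_update base_def)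
  also have "\<dots> = base b powi (X!j)" using assms by (simp add: prod.delta)
  finally show ?thesis .
qed

lemma EPR_lift:
  assumes j: "j < N" and h: "EP1 D h"
  shows "EPR N i (if j = i then D else 0) (\<lambda>X. h (X!j))"
proof -
  obtain T where T: "\<forall>t\<in>set T. sgnok (snd t) \<and> snd (snd t) \<le> D"
    "\<forall>x. h x = (\<Sum>t\<leftarrow>T. smult (base (snd t) powi x) (fst t))" using h unfolding EP1_def by blast
  show ?thesis unfolding EPR_def
  proof (rule exI[of _ "map (\<lambda>t. (fst t, (replicate N (1,0))[j := snd t])) T"], rule conjI; (intro ballI allI impI)?)
    fix t assume "t \<in> set (map (\<lambda>t. (fst t, (replicate N (1,0))[j := snd t])) T)"
    then obtain t0 where t0: "t0 \<in> set T" "t = (fst t0, (replicate N (1,0))[j := snd t0])" by auto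
    show "length (snd t) = N \<and> (\<forall>k<N. sgnok (snd t ! k)) \<and> (i < N \<longrightarrow> snd (snd t ! i) \<le> (if j = i then D else 0))"
      using t0 T(1) j by (auto simp: nth_list_update sgnok_def)
  next
    fix X :: "int list" assume "length X = N"
    show "h (X!j) = (\<Sum>t\<leftarrow>map (\<lambda>t. (fst t, (replicate N (1,0))[j := snd t])) T. smult (mon (snd t) X) (fst t))"
      using T(2) by (simp add: o_def mon_single[OF j])
  qed
qed

lemma EPR_sum: fixes d :: nat shows "(\<And>k. k < d \<Longrightarrow> EPR N i D (f k)) \<Longrightarrow> EPR N i D (\<lambda>X. \<Sum>k<d. f k X)"
proof (induction d)
  case 0 then show ?case by (simp add: EPR_zero)
next
  case (Suc d)
  have "EPR N i D (\<lambda>X. (\<Sum>k<d. f k X) + f d X)"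
    by (rule EPR_add) (use Suc in auto)
  then show ?case by simp
qed

definition MEPR :: "nat \<Rightarrow> nat \<Rightarrow> nat \<Rightarrow> (int list \<Rightarrow> fmat) \<Rightarrow> bool" where
  "MEPR N i D F \<longleftrightarrow> (\<forall>a b. EPR N i D (\<lambda>X. F X a b))"

lemma MEPR_mm: "MEPR N i D1 F \<Longrightarrow> MEPR N i D2 G \<Longrightarrow> MEPR N i (D1 + D2) (\<lambda>X. mm d (F X) (G X))"
  unfolding MEPR_def mm_def by (auto intro!: EPR_sum EPR_mult)

lemma MEPR_add: "MEPR N i D F \<Longrightarrow> MEPR N i D G \<Longrightarrow> MEPR N i D (\<lambda>X. F X + G X)"
  unfolding MEPR_def by (auto intro!: EPR_add)

lemma MEPR_diff: "MEPR N i D F \<Longrightarrow> MEPR N i D G \<Longrightarrow> MEPR N i D (\<lambda>X. F X - G X)"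
  unfolding MEPR_def by (auto intro!: EPR_diff)

lemma MEPR_const: "MEPR N i D (\<lambda>X. M)"
  unfolding MEPR_def by (auto intro!: EPR_const)

lemma MEPR_mono: "MEPR N i D F \<Longrightarrow> D \<le> D' \<Longrightarrow> MEPR N i D' F"
  unfolding MEPR_def by (auto intro: EPR_mono)

lemma MEPR_lift:
  assumes "j < N" "\<And>a b. EP1 D (\<lambda>x. H x a b)"
  shows "MEPR N i (if j = i then D else 0) (\<lambda>X. H (X!j))"
  unfolding MEPR_def using EPR_lift[OF assms(1) assms(2)] by blast

lemma EP1_Xif:
  assumes "\<forall>a<length L. sgnok (fst (L!a)) \<and> snd (fst (L!a)) \<le> D"
  shows "EP1 D (\<lambda>x. Xif L x a b)"
  unfolding EP1_def
proof (rule exI[of _ "map (\<lambda>t. (snd t a b, fst t)) L"], rule conjI; (intro allI ballI)?)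
  fix t assume "t \<in> set (map (\<lambda>t. (snd t a b, fst t)) L)"
  then obtain k where k: "k < length L" "t = (snd (L!k) a b, fst (L!k))" by (auto simp: in_set_conv_nth)
  then show "sgnok (snd t) \<and> snd (snd t) \<le> D" using assms by simp
next
  fix x
  have "Xif L x a b = (\<Sum>k<length L. smult (base (fst (L!k)) powi x) (snd (L!k) a b))"
    by (simp add: Xif_def fmat_sum_apply rm_def)
  also have "\<dots> = (\<Sum>t\<leftarrow>map (\<lambda>t. (snd t a b, fst t)) L. smult (base (snd t) powi x) (fst t))"
    by (simp add: sum_list_sum_nth atLeast0LessThan)
  finally show "Xif L x a b = (\<Sum>t\<leftarrow>map (\<lambda>t. (snd t a b, fst t)) L. smult (base (snd t) powi x) (fst t))" .
qed

lemma EP1_LL: "EP1 (2*m+1) (\<lambda>x. Xif (LL m) (x + s) a b)"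
proof -
  have "EP1 (2*m+1) (\<lambda>x. Xif (LL m) x a b)"
    by (rule EP1_Xif) (use Inv_shape[OF Inv_LL] in \<open>auto simp: sgnok_def\<close>)
  then show ?thesis by (rule EP1_shift)
qed

lemma EP1_geo: "EP1 (2*m+2) (\<lambda>x. rm (cst ((qvar^(2*m+2)) powi x)) K a b)"
  unfolding EP1_def
  by (rule exI[of _ "[(K a b, (1, 2*m+2))]"]) (auto simp: sgnok_def base_def rm_def)

section \<open>From exponential sums to q-quasi-polynomials\<close>

lemma per_k:
  assumes P: "\<forall>X j. length X = N \<longrightarrow> j < N \<longrightarrow> g (X[j := X!j + P]) = g X"
    and X: "length X = N" and j: "j < N"
  shows "g (X[j := X!j + P * int k]) = g X"
proof (induction k)
  case 0 then show ?case by simp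
next
  case (Suc k)
  define Y where "Y = X[j := X!j + P * int k]"
  have lY: "length Y = N" using X by (simp add: Y_def)
  have Yj: "Y!j = X!j + P * int k" using X j by (simp add: Y_def)
  have "Y[j := Y!j + P] = Y[j := X!j + P * int (Suc k)]"
    unfolding Yj by (simp add: algebra_simps)
  also have "\<dots> = X[j := X!j + P * int (Suc k)]" by (simp add: Y_def)
  finally have "X[j := X!j + P * int (Suc k)] = Y[j := Y!j + P]" by simp
  then have "g (X[j := X!j + P * int (Suc k)]) = g Y" using P lY j by simp
  then show ?case using Suc by (simp add: Y_def)
qed

lemma periodic_add:
  assumes "periodic_on_Zn N g1" "periodic_on_Zn N g2"
  shows "periodic_on_Zn N (\<lambda>X. g1 X + g2 X)"
proof -
  obtain P1 where P1: "P1 > 0" "\<forall>X j. length X = N \<longrightarrow> j < N \<longrightarrow> g1 (X[j := X!j + P1]) = g1 X"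
    using assms(1) unfolding periodic_on_Zn_def by blast
  obtain P2 where P2: "P2 > 0" "\<forall>X j. length X = N \<longrightarrow> j < N \<longrightarrow> g2 (X[j := X!j + P2]) = g2 X"
    using assms(2) unfolding periodic_on_Zn_def by blast
  show ?thesis unfolding periodic_on_Zn_def
  proof (rule exI[of _ "P1 * P2"], intro conjI allI impI)
    show "P1 * P2 > 0" using P1 P2 by simp
    fix X :: "int list" and j assume X: "length X = N" and j: "j < N"
    have "g1 (X[j := X!j + P1 * int (nat P2)]) = g1 X" by (rule per_k[OF P1(2) X j])
    moreover have "g2 (X[j := X!j + P2 * int (nat P1)]) = g2 X" by (rule per_k[OF P2(2) X j])
    ultimately show "g1 (X[j := X!j + P1 * P2]) + g2 (X[j := X!j + P1 * P2]) = g1 X + g2 X"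
      using P1(1) P2(1) by (simp add: mult.commute)
  qed
qed

lemma periodic_zero: "periodic_on_Zn N (\<lambda>X. 0)"
  unfolding periodic_on_Zn_def by (rule exI[of _ 1]) simp

lemma periodic_if: "(b \<Longrightarrow> periodic_on_Zn N g) \<Longrightarrow> periodic_on_Zn N (\<lambda>X. if b then g X else 0)"
  by (cases b) (simp_all add: periodic_zero)

lemma qqp_add:
  assumes "qqp_deg_le q N i D g1" "qqp_deg_le q N i D g2"
  shows "qqp_deg_le q N i D (\<lambda>X. g1 X + g2 X)"
proof -
  obtain M1 cf1 where M1: "finite M1" "\<forall>m\<in>M1. length m = N \<and> m ! i \<le> D \<and> periodic_on_Zn N (cf1 m)"
    "\<forall>X. length X = N \<longrightarrow> g1 X = (\<Sum>m\<in>M1. cf1 m X * q powi (\<Sum>j<N. int (m ! j) * X ! j))"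
    using assms(1) unfolding qqp_deg_le_def by blast
  obtain M2 cf2 where M2: "finite M2" "\<forall>m\<in>M2. length m = N \<and> m ! i \<le> D \<and> periodic_on_Zn N (cf2 m)"
    "\<forall>X. length X = N \<longrightarrow> g2 X = (\<Sum>m\<in>M2. cf2 m X * q powi (\<Sum>j<N. int (m ! j) * X ! j))"
    using assms(2) unfolding qqp_deg_le_def by blast
  define cf where "cf m X = (if m \<in> M1 then cf1 m X else 0) + (if m \<in> M2 then cf2 m X else 0)" for m X
  define w where "w m X = q powi (\<Sum>j<N. int (m ! j) * X ! j)" for m :: "nat list" and X
  show ?thesis unfolding qqp_deg_le_def
  proof (intro exI[of _ "M1 \<union> M2"] exI[of _ cf], intro conjI; (intro ballI allI impI)?)
    show "finite (M1 \<union> M2)" using M1 M2 by simp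
  next
    fix m assume m: "m \<in> M1 \<union> M2"
    show "length m = N \<and> m ! i \<le> D \<and> periodic_on_Zn N (cf m)"
      using m M1(2) M2(2) unfolding cf_def
      by (auto intro!: periodic_add periodic_if)
  next
    fix X :: "int list" assume X: "length X = N"
    have "(\<Sum>m\<in>M1 \<union> M2. cf m X * w m X) =
          (\<Sum>m\<in>M1 \<union> M2. if m \<in> M1 then cf1 m X * w m X else 0) + (\<Sum>m\<in>M1 \<union> M2. if m \<in> M2 then cf2 m X * w m X else 0)"
    proof -
      have pw: "cf m X * w m X = (if m \<in> M1 then cf1 m X * w m X else 0) + (if m \<in> M2 then cf2 m X * w m X else 0)" for m
        by (simp add: cf_def distrib_right)
      show ?thesis unfolding pw by (rule sum.distrib)
    qed
    also have "\<dots> = (\<Sum>m\<in>M1. cf1 m X * w m X) + (\<Sum>m\<in>M2. cf2 m X * w m X)"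
      using M1(1) M2(1) by (simp add: sum.If_cases Int_absorb1 Int_absorb2)
    also have "\<dots> = g1 X + g2 X" using M1(3) M2(3) X by (simp add: w_def)
    finally show "g1 X + g2 X = (\<Sum>m\<in>M1 \<union> M2. cf m X * q powi (\<Sum>j<N. int (m ! j) * X ! j))"
      by (simp add: w_def)
  qed
qed

lemma qqp_zero: "qqp_deg_le q N i D (\<lambda>X. 0)"
  unfolding qqp_deg_le_def by (intro exI[of _ "{}"]) simp

lemma prod_powi_sum: fixes N :: nat and c :: "nat \<Rightarrow> int" shows "q \<noteq> 0 \<Longrightarrow> (\<Prod>j<N. q powi (c j)) = (q :: ratfun) powi (\<Sum>j<N. c j)"
  by (induction N) (simp_all add: power_int_add)

lemma base_powi: "base b powi x = (of_int (fst b)) powi x * qvar powi (int (snd b) * x)"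
  by (simp add: base_def power_int_mult_distrib power_int_power)

lemma sgn_powi2: "s = 1 \<or> s = -1 \<Longrightarrow> (of_int s :: ratfun) powi (x + 2) = (of_int s) powi x"
proof -
  assume s: "s = 1 \<or> s = -1"
  then have "(of_int s :: ratfun) \<noteq> 0" by auto
  then have "(of_int s :: ratfun) powi (x + 2) = (of_int s) powi x * (of_int s)^2"
    by (simp add: power_int_add)
  then show ?thesis using s by auto
qed

lemma qqp_term:
  assumes l: "length bs = N" and sg: "\<forall>j<N. sgnok (bs!j)" and dg: "i < N \<longrightarrow> snd (bs!i) \<le> D" and i: "i < N"
  shows "qqp_deg_le qvar N i D (\<lambda>X. a * mon bs X)"
proof -
  define cf where "cf m X = a * (\<Prod>j<N. (of_int (fst (bs!j)) :: ratfun) powi (X!j))" for m :: "nat list" and X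
  show ?thesis unfolding qqp_deg_le_def
  proof (intro exI[of _ "{map snd bs}"] exI[of _ cf], intro conjI; (intro ballI allI impI)?)
    show "finite {map snd bs}" by simp
  next
    fix m assume "m \<in> {map snd bs}"
    then have m: "m = map snd bs" by simp
    have per: "periodic_on_Zn N (cf m)"
      unfolding periodic_on_Zn_def
    proof (rule exI[of _ 2], intro conjI allI impI)
      fix X :: "int list" and j0 assume X: "length X = N" and j0: "j0 < N"
      have "(\<Prod>j<N. (of_int (fst (bs!j)) :: ratfun) powi (X[j0 := X!j0 + 2] ! j)) = (\<Prod>j<N. (of_int (fst (bs!j)) :: ratfun) powi (X!j))"
      proof (rule prod.cong[OF refl])
        fix j assume j: "j \<in> {..<N}"
        show "(of_int (fst (bs!j)) :: ratfun) powi (X[j0 := X!j0 + 2] ! j) = (of_int (fst (bs!j))) powi (X!j)"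
        proof (cases "j = j0")
          case True
          then show ?thesis using X j0 sg sgn_powi2[of "fst (bs!j)" "X!j"] by (simp add: sgnok_def)
        next
          case False then show ?thesis by simp
        qed
      qed
      then show "cf m (X[j0 := X!j0 + 2]) = cf m X" by (simp add: cf_def)
    qed simp
    show "length m = N \<and> m ! i \<le> D \<and> periodic_on_Zn N (cf m)"
      using m l dg i per by simp
  next
    fix X :: "int list" assume X: "length X = N"
    have "mon bs X = (\<Prod>j<N. (of_int (fst (bs!j)) :: ratfun) powi (X!j)) * (\<Prod>j<N. qvar powi (int (snd (bs!j)) * X!j))"
      unfolding mon_def l base_powi by (rule prod.distrib)
    also have "(\<Prod>j<N. qvar powi (int (snd (bs!j)) * X!j)) = qvar powi (\<Sum>j<N. int (snd (bs!j)) * X!j)"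
      by (rule prod_powi_sum[OF qvar_ne0])
    also have "(\<Sum>j<N. int (snd (bs!j)) * X!j) = (\<Sum>j<N. int (map snd bs ! j) * X!j)"
      using l by (intro sum.cong) auto
    finally show "a * mon bs X = (\<Sum>m\<in>{map snd bs}. cf m X * qvar powi (\<Sum>j<N. int (m ! j) * X ! j))"
      by (simp add: cf_def mult.assoc)
  qed
qed

lemma qqp_cong:
  "qqp_deg_le q N i D g' \<Longrightarrow> (\<And>X. length X = N \<Longrightarrow> g X = g' X) \<Longrightarrow> qqp_deg_le q N i D g"
  unfolding qqp_deg_le_def by simp

lemma coeff_sum_list: "coeff (\<Sum>t\<leftarrow>Ts. f t) p = (\<Sum>t\<leftarrow>Ts. coeff (f t) p)"
  by (induction Ts) simp_all

lemma EPR_qqp: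
  assumes i: "i < N" and E: "EPR N i D f"
  shows "qqp_deg_le qvar N i D (\<lambda>X. coeff (f X) p)"
proof -
  obtain Ts where Ts: "\<forall>t\<in>set Ts. length (snd t) = N \<and> (\<forall>j<N. sgnok (snd t ! j)) \<and> (i < N \<longrightarrow> snd (snd t ! i) \<le> D)"
    "\<forall>X. length X = N \<longrightarrow> f X = (\<Sum>t\<leftarrow>Ts. smult (mon (snd t) X) (fst t))"
    using E unfolding EPR_def by blast
  have "qqp_deg_le qvar N i D (\<lambda>X. \<Sum>t\<leftarrow>Ts'. coeff (fst t) p * mon (snd t) X)" if "set Ts' \<subseteq> set Ts" for Ts'
    using that
  proof (induction Ts')
    case Nil then show ?case by (simp add: qqp_zero)
  next
    case (Cons t Ts')
    then have t: "t \<in> set Ts" by simp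
    have "qqp_deg_le qvar N i D (\<lambda>X. coeff (fst t) p * mon (snd t) X + (\<Sum>t\<leftarrow>Ts'. coeff (fst t) p * mon (snd t) X))"
      by (rule qqp_add, rule qqp_term) (use t Ts(1) i Cons in auto)
    then show ?case by simp
  qed
  then have "qqp_deg_le qvar N i D (\<lambda>X. \<Sum>t\<leftarrow>Ts. coeff (fst t) p * mon (snd t) X)" by blast
  then show ?thesis
    by (rule qqp_cong) (simp add: Ts(2) coeff_sum_list mult.commute)
qed

definition lo :: "nat \<Rightarrow> int list \<Rightarrow> int" where
  "lo j X = (if j = 0 then 0 else X!(j-1))"
definition hi :: "nat \<Rightarrow> int \<Rightarrow> nat \<Rightarrow> int list \<Rightarrow> int" where
  "hi N c j X = (if j < N then X!j else c)"

lemma bnds_map: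
  assumes "length X = N"
  shows "bnds c X = map (\<lambda>j. (lo j X, hi N c j X)) [0..<Suc N]"
proof (rule nth_equalityI)
  show "length (bnds c X) = length (map (\<lambda>j. (lo j X, hi N c j X)) [0..<Suc N])"
    using assms by (simp add: bnds_def)
next
  fix k assume "k < length (bnds c X)"
  then have k: "k < Suc N" using assms by (simp add: bnds_def)
  have a: "(0 # X) ! k = lo k X" by (cases k) (simp_all add: lo_def)
  have b: "(X @ [c]) ! k = hi N c k X" using assms k by (simp add: hi_def nth_append)
  have mp: "map (\<lambda>j. (lo j X, hi N c j X)) [0..<Suc N] ! k = (lo k X, hi N c k X)"
    using k by (simp del: upt_Suc)
  show "bnds c X ! k = map (\<lambda>j. (lo j X, hi N c j X)) [0..<Suc N] ! k"
    unfolding mp using k assms a b by (simp add: bnds_def)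
qed

definition PRf :: "nat \<Rightarrow> (nat \<Rightarrow> fmat) \<Rightarrow> nat list \<Rightarrow> fmat" where
  "PRf d F js = foldr (\<lambda>j acc. mm d (F j) acc) js (idm d)"

lemma cln_PRf: "(\<And>j. cln d (F j)) \<Longrightarrow> cln d (PRf d F js)"
  unfolding PRf_def by (induction js) (auto intro: cln_mm cln_idm)

lemma PRf_append: "(\<And>j. cln d (F j)) \<Longrightarrow> PRf d F (xs @ ys) = mm d (PRf d F xs) (PRf d F ys)"
proof (induction xs)
  case Nil then show ?case by (simp add: PRf_def[of d F "[]"] mm_idm_left cln_PRf)
next
  case (Cons x xs)
  then show ?case by (simp add: PRf_def mm_assoc)
qed

lemma PRf_two: "(\<And>j. cln d (F j)) \<Longrightarrow> PRf d F [a, b] = mm d (F a) (F b)"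
  by (simp add: PRf_def mm_idm_right)

lemma chainM_bnds:
  assumes "length X = N"
  shows "chainM d M (bnds c X) = PRf d (\<lambda>j. M (lo j X) (hi N c j X)) [0..<Suc N]"
  unfolding bnds_map[OF assms] chainM_def PRf_def by (simp add: foldr_map o_def)

lemma upt_split3:
  assumes "i < N"
  shows "[0..<Suc N] = [0..<i] @ [i, Suc i] @ [Suc (Suc i)..<Suc N]"
proof -
  have "[0..<i + (Suc N - i)] = [0..<i] @ [i..<i + (Suc N - i)]" by (rule upt_add_eq_append) simp
  moreover have "i + (Suc N - i) = Suc N" using assms by simp
  ultimately have "[0..<Suc N] = [0..<i] @ [i..<Suc N]" by simp
  also have "[i..<Suc N] = i # Suc i # [Suc (Suc i)..<Suc N]"
    using assms by (simp add: upt_conv_Cons)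
  finally show ?thesis by simp
qed

lemma EPR_cong: "EPR N i D f \<Longrightarrow> (\<And>X. length X = N \<Longrightarrow> g X = f X) \<Longrightarrow> EPR N i D g"
  unfolding EPR_def by simp

lemma MEPR_cong: "MEPR N i D F \<Longrightarrow> (\<And>X. length X = N \<Longrightarrow> G X = F X) \<Longrightarrow> MEPR N i D G"
  unfolding MEPR_def
proof (intro allI)
  fix a b assume h: "\<forall>a b. EPR N i D (\<lambda>X. F X a b)" and e: "\<And>X. length X = N \<Longrightarrow> G X = F X"
  show "EPR N i D (\<lambda>X. G X a b)" by (rule EPR_cong[of N i D "\<lambda>X. F X a b"]) (use h e in auto)
qed

lemma MEPR_lift_i: "i < N \<Longrightarrow> (\<And>a b. EP1 D (\<lambda>x. H x a b)) \<Longrightarrow> MEPR N i D (\<lambda>X. H (X!i))"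
  using MEPR_lift[of i N D H i] by simp

context
  fixes m N i :: nat and c :: int
  assumes iN: "i < N"
begin

abbreviation "Xi \<equiv> Xif (LL m)"

lemma M_lift: "j < N \<Longrightarrow> MEPR N i (if j = i then 2*m+1 else 0) (\<lambda>X. Xi (X!j + s))"
  by (rule MEPR_lift) (use EP1_LL in auto)

lemma M_lift0: "j < N \<Longrightarrow> j \<noteq> i \<Longrightarrow> MEPR N i 0 (\<lambda>X. Xi (X!j + s))"
  using M_lift[of j s] by simp

lemma M_lifti: "MEPR N i (2*m+1) (\<lambda>X. Xi (X!i + s))"
  using M_lift[of i s] iN by simp

lemma M_lo: "j \<noteq> Suc i \<Longrightarrow> j \<le> N \<Longrightarrow> MEPR N i 0 (\<lambda>X. Xi (lo j X))"
proof (cases j)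
  case 0 then show ?thesis by (simp add: lo_def MEPR_const)
next
  case (Suc j')
  assume "j \<noteq> Suc i" "j \<le> N"
  then have "j' < N" "j' \<noteq> i" using Suc by auto
  then have "MEPR N i 0 (\<lambda>X. Xi (X!j' + 0))" by (rule M_lift0)
  then show ?thesis using Suc by (simp add: lo_def)
qed

lemma M_hi: "j \<noteq> i \<Longrightarrow> MEPR N i 0 (\<lambda>X. Xi (hi N c j X + 1))"
proof (cases "j < N")
  case True
  assume "j \<noteq> i"
  then show ?thesis using M_lift0[OF True, of 1] True by (simp add: hi_def)
next
  case False then show ?thesis by (simp add: hi_def MEPR_const)
qed

lemma Fj_deg0:
  assumes "j \<le> N" "j \<noteq> i" "j \<noteq> Suc i"
  shows "MEPR N i 0 (\<lambda>X. Mf m (lo j X) (hi N c j X))"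
  unfolding Mf_def by (rule MEPR_diff[OF M_hi M_lo]) (use assms in auto)

lemma PR_deg0:
  assumes "\<forall>j\<in>set js. j \<le> N \<and> j \<noteq> i \<and> j \<noteq> Suc i"
  shows "MEPR N i 0 (\<lambda>X. PRf (2^m) (\<lambda>j. Mf m (lo j X) (hi N c j X)) js)"
  using assms
proof (induction js)
  case Nil then show ?case by (simp add: PRf_def MEPR_const)
next
  case (Cons j js)
  have "MEPR N i (0 + 0) (\<lambda>X. mm (2^m) (Mf m (lo j X) (hi N c j X)) (PRf (2^m) (\<lambda>j. Mf m (lo j X) (hi N c j X)) js))"
    by (rule MEPR_mm[OF Fj_deg0 Cons.IH]) (use Cons.prems in auto)
  then show ?case by (simp add: PRf_def)
qed

lemma Mid_deg:
  "MEPR N i (2*m+2) (\<lambda>X. mm (2^m) (Mf m (lo i X) (hi N c i X)) (Mf m (lo (Suc i) X) (hi N c (Suc i) X)))"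
proof -
  define A where "A X = Xi (X!i + 1)" for X
  define B where "B X = Xi (lo i X)" for X
  define C where "C X = Xi (hi N c (Suc i) X + 1)" for X
  define E where "E X = Xi (X!i + 0)" for X
  have eq: "mm (2^m) (Mf m (lo i X) (hi N c i X)) (Mf m (lo (Suc i) X) (hi N c (Suc i) X))
        = mm (2^m) (A X) (C X) - rm (cst ((qvar^(2*m+2)) powi (X!i))) (mm (2^m) (Xi 1) (Xi 0)) - mm (2^m) (B X) (C X) + mm (2^m) (B X) (E X)" for X
  proof -
    have h1: "hi N c i X = X!i" using iN by (simp add: hi_def)
    have l1: "lo (Suc i) X = X!i" by (simp add: lo_def)
    have g: "mm (2^m) (A X) (E X) = rm (cst ((qvar^(2*m+2)) powi (X!i))) (mm (2^m) (Xi 1) (Xi 0))"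
      unfolding A_def E_def by (simp add: geoK(1)[OF Inv_LL])
    show ?thesis
      unfolding Mf_def h1 l1 mm_diff_left mm_diff_right g[symmetric]
      by (simp add: A_def B_def C_def E_def)
  qed
  have mA: "MEPR N i (2*m+1) A" unfolding A_def by (rule M_lifti)
  have mE: "MEPR N i (2*m+1) E" unfolding E_def by (rule M_lifti)
  have mB: "MEPR N i 0 B" unfolding B_def by (rule M_lo) (use iN in auto)
  have mC: "MEPR N i 0 C" unfolding C_def by (rule M_hi) simp
  have mG: "MEPR N i (2*m+2) (\<lambda>X. rm (cst ((qvar^(2*m+2)) powi (X!i))) (mm (2^m) (Xi 1) (Xi 0)))"
    by (rule MEPR_lift_i[OF iN]) (rule EP1_geo)
  have m1: "MEPR N i (2*m+2) (\<lambda>X. mm (2^m) (A X) (C X))"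
    by (rule MEPR_mono[OF MEPR_mm[OF mA mC]]) simp
  have m3: "MEPR N i (2*m+2) (\<lambda>X. mm (2^m) (B X) (C X))"
    by (rule MEPR_mono[OF MEPR_mm[OF mB mC]]) simp
  have m4: "MEPR N i (2*m+2) (\<lambda>X. mm (2^m) (B X) (E X))"
    by (rule MEPR_mono[OF MEPR_mm[OF mB mE]]) simp
  have "MEPR N i (2*m+2) (\<lambda>X. mm (2^m) (A X) (C X) - rm (cst ((qvar^(2*m+2)) powi (X!i))) (mm (2^m) (Xi 1) (Xi 0)) - mm (2^m) (B X) (C X) + mm (2^m) (B X) (E X))"
    by (intro MEPR_add MEPR_diff m1 mG m3 m4)
  then show ?thesis unfolding eq .
qed

lemma Gpoly_EPR: "EPR N i (2*m+2) (Gpoly m c)"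
proof -
  define F where "F X j = Mf m (lo j X) (hi N c j X)" for X j
  define d where "d = (2::nat)^m"
  have cF: "\<And>X j. cln d (F X j)" unfolding F_def d_def by (rule cln_Mf)
  have ch: "chainM d (Mf m) (bnds c X) = mm d (PRf d (F X) [0..<i]) (mm d (mm d (F X i) (F X (Suc i))) (PRf d (F X) [Suc (Suc i)..<Suc N]))"
    if X: "length X = N" for X
  proof -
    have "chainM d (Mf m) (bnds c X) = PRf d (F X) [0..<Suc N]"
      unfolding chainM_bnds[OF X] F_def ..
    also have "\<dots> = mm d (PRf d (F X) [0..<i]) (mm d (PRf d (F X) [i, Suc i]) (PRf d (F X) [Suc (Suc i)..<Suc N]))"
      unfolding upt_split3[OF iN] PRf_append[OF cF] ..
    also have "PRf d (F X) [i, Suc i] = mm d (F X i) (F X (Suc i))" by (rule PRf_two[OF cF])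
    finally show ?thesis .
  qed
  have pre: "MEPR N i 0 (\<lambda>X. PRf d (F X) [0..<i])"
    unfolding F_def d_def by (rule PR_deg0) (use iN in auto)
  have post: "MEPR N i 0 (\<lambda>X. PRf d (F X) [Suc (Suc i)..<Suc N])"
    unfolding F_def d_def by (rule PR_deg0) auto
  have mid: "MEPR N i (2*m+2) (\<lambda>X. mm d (F X i) (F X (Suc i)))"
    unfolding F_def d_def by (rule Mid_deg)
  have all: "MEPR N i ((0 + (0 + (2*m+2 + 0))) + 0)
     (\<lambda>X. mm d (mm d (fst (UV m c)) (mm d (PRf d (F X) [0..<i]) (mm d (mm d (F X i) (F X (Suc i))) (PRf d (F X) [Suc (Suc i)..<Suc N])))) (snd (UV m c)))"
    by (rule MEPR_mm[OF MEPR_mm[OF MEPR_const MEPR_mm[OF pre MEPR_mm[OF mid post]]] MEPR_const])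
  have "EPR N i (2*m+2) (\<lambda>X. mm d (mm d (fst (UV m c)) (mm d (PRf d (F X) [0..<i]) (mm d (mm d (F X i) (F X (Suc i))) (PRf d (F X) [Suc (Suc i)..<Suc N])))) (snd (UV m c)) 0 0)"
    using all unfolding MEPR_def by simp
  then show ?thesis
  proof (rule EPR_cong)
    fix X :: "int list" assume X: "length X = N"
    show "Gpoly m c X = mm d (mm d (fst (UV m c)) (mm d (PRf d (F X) [0..<i]) (mm d (mm d (F X i) (F X (Suc i))) (PRf d (F X) [Suc (Suc i)..<Suc N])))) (snd (UV m c)) 0 0"
      unfolding Gpoly_def d_def[symmetric] ch[OF X] ..
  qed
qed

end

theorem lemma15:
  fixes n r p :: nat and c :: int
  assumes "0 < r" and "r \<le> n" and "p \<le> n"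
  shows "\<forall>i < n - r. qqp_deg_le qvar (n - r) i (2 * r) (Gq qvar r n c (T n p))"
proof (intro allI impI)
  fix i assume i: "i < n - r"
  obtain m where r: "r = Suc m" using assms(1) by (cases r) auto
  have q: "qqp_deg_le qvar (n - r) i (2*m+2) (\<lambda>X. coeff (Gpoly m c X) p)"
    by (rule EPR_qqp[OF i Gpoly_EPR[OF i]])
  have e: "2 * r = 2*m+2" using r by simp
  have G: "Gq qvar r n c (T n p) X = coeff (Gpoly m c X) p" if X: "length X = n - r" for X
  proof -
    have "Suc m \<le> n" "length X = n - Suc m" using assms(2) X r by auto
    then show ?thesis unfolding r by (rule Gq_Gpoly)
  qed
  show "qqp_deg_le qvar (n - r) i (2 * r) (Gq qvar r n c (T n p))"
    unfolding e by (rule qqp_cong[OF q G])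
qed

end
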